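(* Let $n\ge5$ be odd, $k=\frac{n-3}{2}$, $G=(V,E)=K_n$, let $C=(v_1,\dots,v_{2k+1})$ be a cycle of length $n-2$ in $G$ and $s,t$ the two vertices not on $C$. Then the canonical transformation of the $C$-induced constraint $x_{\{s,t\}}+k\cdot x(\delta(V(C)))+\sum_{e\in E[V\setminus\{s,t\}]}\ell(e)x_e\ge 2k+1$ defines a facet of $P_{(\widehat G,\widehat R)}$.
   Context: $\delta(V(C))$ is the set of edges with exactly one endpoint on $C$, $E[S]$ the set of edges with both endpoints in $S$, $x(S)=\sum_{e\in S}x_e$; for $i\ne j$, $\ell(\{v_i,v_j\})=|j-i|$ if $|j-i|$ is odd and $2k+1-|j-i|$ otherwise. The bipartite graph $\widehat G=(\widehat V,\widehat E)$ has vertex set $\{v^+\colon v\in V\}\cup\{v^-\colon v\in V\}$ and edges $\{v^+,v^-\}$ for $v\in V$ and $\{u^+,v^-\},\{u^-,v^+\}$ for each $\{u,v\}\in E$; red edges $\widehat R=\widehat E\setminus\{\{v^+,v^-\}\colon v\in V\}$. $P_{(\widehat G,\widehat R)}$ is the convex hull of incidence vectors of perfect matchings $M$ of $\widehat G$ with $|M\cap\widehat R|$ odd. The canonical transformation of $\sum_{e\in E}a_ex_e\ge b$ is $\sum_{\{u,v\}\in E}a_{\{u,v\}}(y_{\{u^+,v^-\}}+y_{\{u^-,v^+\}})\ge b$ in variables $y\in\mathbb{R}^{\widehat E}$. *)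

theory Defs
  imports "HOL-Analysis.Analysis"
begin

text \<open>Vertices of the auxiliary graph: (v, True) is v^+, (v, False) is v^-.
  Vectors y in R^(hat E) are represented in the ambient space indexed by all
  sets of auxiliary vertices (a finite type); only coordinates at edges of
  hat G are used.  Affine dimension and faces are intrinsic, so this is harmless.\<close>

type_synonym ('v) hvec = "real ^ (('v \<times> bool) set)"

definition complete_edges :: "'v set \<Rightarrow> 'v set set" where
  "complete_edges V = {{u, v} | u v. u \<in> V \<and> v \<in> V \<and> u \<noteq> v}"

definition hat_vertices :: "'v set \<Rightarrow> ('v \<times> bool) set" where
  "hat_vertices V = {(v, True) | v. v \<in> V} \<union> {(v, False) | v. v \<in> V}"

definition hat_edges :: "'v set \<Rightarrow> 'v set set \<Rightarrow> ('v \<times> bool) set set" where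
  "hat_edges V E =
     {{(v, True), (v, False)} | v. v \<in> V}
     \<union> {{(u, True), (v, False)} | u v. {u, v} \<in> E}
     \<union> {{(u, False), (v, True)} | u v. {u, v} \<in> E}"

definition hat_red :: "'v set \<Rightarrow> 'v set set \<Rightarrow> ('v \<times> bool) set set" where
  "hat_red V E = hat_edges V E - {{(v, True), (v, False)} | v. v \<in> V}"

definition perfect_matching :: "'a set \<Rightarrow> 'a set set \<Rightarrow> 'a set set \<Rightarrow> bool" where
  "perfect_matching W F M \<longleftrightarrow> M \<subseteq> F \<and> (\<forall>x\<in>W. \<exists>!e. e \<in> M \<and> x \<in> e)"

definition incidence :: "('v::finite \<times> bool) set set \<Rightarrow> 'v hvec" where
  "incidence M = (\<chi> e. if e \<in> M then 1 else 0)"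

definition odd_pm_polytope :: "'v::finite set \<Rightarrow> 'v set set \<Rightarrow> 'v hvec set" where
  "odd_pm_polytope V E = convex hull
     {incidence M | M. perfect_matching (hat_vertices V) (hat_edges V E) M
                       \<and> odd (card (M \<inter> hat_red V E))}"

definition endpts :: "'v set \<Rightarrow> 'v \<times> 'v" where
  "endpts e = (SOME p. e = {fst p, snd p})"

definition canon_lhs :: "'v::finite set set \<Rightarrow> ('v set \<Rightarrow> real) \<Rightarrow> 'v hvec \<Rightarrow> real" where
  "canon_lhs E a y = (\<Sum>e\<in>E. a e *
      (y $ {(fst (endpts e), True), (snd (endpts e), False)}
     + y $ {(fst (endpts e), False), (snd (endpts e), True)}))"

definition cut_edges :: "'v set set \<Rightarrow> 'v set \<Rightarrow> 'v set set" where
  "cut_edges E S = {e \<in> E. card (e \<inter> S) = 1}"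

definition induced_edges :: "'v set set \<Rightarrow> 'v set \<Rightarrow> 'v set set" where
  "induced_edges E S = {e \<in> E. e \<subseteq> S}"

definition ell :: "(nat \<Rightarrow> 'v) \<Rightarrow> nat \<Rightarrow> 'v set \<Rightarrow> nat" where
  "ell c k e = (let p = (SOME p. fst p \<in> {1..2*k+1} \<and> snd p \<in> {1..2*k+1}
                                \<and> fst p \<noteq> snd p \<and> e = {c (fst p), c (snd p)});
                    d = nat \<bar>int (snd p) - int (fst p)\<bar>
                in if odd d then d else 2*k+1-d)"

definition C_induced_coeff ::
  "'v set \<Rightarrow> 'v set set \<Rightarrow> (nat \<Rightarrow> 'v) \<Rightarrow> nat \<Rightarrow> 'v \<Rightarrow> 'v \<Rightarrow> 'v set \<Rightarrow> real" where
  "C_induced_coeff V E c k s t e =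
     (if e = {s, t} then 1 else 0)
   + (if e \<in> cut_edges E (c ` {1..2*k+1}) then real k else 0)
   + (if e \<in> induced_edges E (V - {s, t}) then real (ell c k e) else 0)"

end

theory Submission
  imports Defs
begin

definition hm :: "'v \<Rightarrow> 'v \<Rightarrow> ('v \<times> bool) set" where
  "hm u v = {(u,True),(v,False)}"

lemma hm_eq_iff[simp]: "hm u v = hm u' v' \<longleftrightarrow> u = u' \<and> v = v'"
  unfolding hm_def by (auto simp: doubleton_eq_iff)

lemma complete_edges_mem: "{u,v} \<in> complete_edges UNIV \<longleftrightarrow> u \<noteq> v"
  unfolding complete_edges_def by (auto simp: doubleton_eq_iff)

lemma hat_edges_complete: "hat_edges UNIV (complete_edges UNIV) = range (\<lambda>(u,v). hm u v)"
proof -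
  have 1: "{(u, False), (v, True)} = hm v u" for u v :: 'a unfolding hm_def by auto
  show ?thesis
    unfolding hat_edges_def complete_edges_mem 1
    by (auto simp: hm_def[symmetric])
qed

lemma hat_red_complete: "hat_red UNIV (complete_edges UNIV) = {hm u v | u v. u \<noteq> v}"
  unfolding hat_red_def hat_edges_complete by (auto simp: hm_def[symmetric])

lemma hat_vertices_UNIV: "hat_vertices UNIV = UNIV"
  unfolding hat_vertices_def by auto

definition Mof :: "('v \<Rightarrow> 'v) \<Rightarrow> ('v \<times> bool) set set" where
  "Mof p = range (\<lambda>u. hm u (p u))"

lemma mem_hm_True: "(x,True) \<in> hm u v \<longleftrightarrow> x = u" unfolding hm_def by auto
lemma mem_hm_False: "(x,False) \<in> hm u v \<longleftrightarrow> x = v" unfolding hm_def by auto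

lemma perm_pm:
  assumes "bij p"
  shows "perfect_matching (hat_vertices UNIV) (hat_edges UNIV (complete_edges UNIV)) (Mof p)"
  unfolding perfect_matching_def hat_vertices_UNIV hat_edges_complete Mof_def
proof (intro conjI ballI)
  show "range (\<lambda>u. hm u (p u)) \<subseteq> range (\<lambda>(u, v). hm u v)" by auto
  fix x :: "'a \<times> bool"
  obtain y b where x: "x = (y,b)" by (cases x)
  show "\<exists>!e. e \<in> range (\<lambda>u. hm u (p u)) \<and> x \<in> e"
  proof (cases b)
    case True
    show ?thesis
      by (rule ex1I[of _ "hm y (p y)"]) (auto simp: x True mem_hm_True)
  next
    case False
    obtain z where z: "p z = y" using assms by (metis bij_pointE)
    show ?thesis
    proof (rule ex1I[of _ "hm z (p z)"])
      have "hm z (p z) \<in> range (\<lambda>u. hm u (p u))" by (rule rangeI)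
      then show "hm z (p z) \<in> range (\<lambda>u. hm u (p u)) \<and> x \<in> hm z (p z)"
        by (simp add: x False z mem_hm_False)
    next
      fix e assume "e \<in> range (\<lambda>u. hm u (p u)) \<and> x \<in> e"
      then obtain u where "e = hm u (p u)" "x \<in> e" by auto
      then have "p u = y" by (auto simp: x False mem_hm_False)
      with z assms have "u = z" by (metis bij_def injD)
      with \<open>e = _\<close> show "e = hm z (p z)" by simp
    qed
  qed
qed

lemma range_hm: "e \<in> range (\<lambda>(u,v). hm u v) \<Longrightarrow> \<exists>a b. e = hm a b" by auto

lemma ex1_same: "\<exists>!x. P x \<Longrightarrow> P a \<Longrightarrow> P b \<Longrightarrow> a = b" by blast

definition perm_of :: "('v \<times> bool) set set \<Rightarrow> 'v \<Rightarrow> 'v" where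
  "perm_of M u = (THE v. hm u v \<in> M)"

lemma pm_perm:
  fixes M :: "('v::finite \<times> bool) set set"
  assumes "perfect_matching (hat_vertices UNIV) (hat_edges UNIV (complete_edges UNIV)) M"
  shows "bij (perm_of M)" "M = Mof (perm_of M)"
proof -
  have pmM: "M \<subseteq> range (\<lambda>(u,v). hm u v) \<and> (\<forall>x\<in>UNIV. \<exists>!e. e \<in> M \<and> x \<in> e)"
    using assms unfolding perfect_matching_def hat_vertices_UNIV hat_edges_complete by assumption
  then have sub: "M \<subseteq> range (\<lambda>(u,v). hm u v)" by (rule conjunct1)
  from pmM have uq0: "\<forall>x\<in>UNIV. \<exists>!e. e \<in> M \<and> x \<in> e" by (rule conjunct2)
  have uq: "\<exists>!e. e \<in> M \<and> x \<in> e" for x using bspec[OF uq0 UNIV_I] .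
  have ex: "\<exists>!v. hm u v \<in> M" for u
  proof -
    obtain e where e': "e \<in> M \<and> (u,True) \<in> e" and eu': "\<forall>y. y \<in> M \<and> (u,True) \<in> y \<longrightarrow> y = e"
      by (rule ex1E[OF uq[of "(u,True)"]])
    from e' have e: "e \<in> M" "(u,True) \<in> e" by auto
    from eu' have eu: "\<And>e'. e' \<in> M \<and> (u,True) \<in> e' \<Longrightarrow> e' = e" by blast
    obtain a b where ab: "e = hm a b" using range_hm[OF subsetD[OF sub e(1)]] by blast
    with e have "a = u" by (simp add: mem_hm_True)
    show ?thesis
    proof (rule ex1I[of _ b])
      show "hm u b \<in> M" using e ab \<open>a = u\<close> by simp
      fix v assume "hm u v \<in> M"
      then have "hm u v = e" using eu by (simp add: mem_hm_True)
      then show "v = b" using ab \<open>a = u\<close> by simp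
    qed
  qed
  have pm: "hm u (perm_of M u) \<in> M" for u
    unfolding perm_of_def using theI'[OF ex[of u]] .
  have inj: "inj (perm_of M)"
  proof (rule injI)
    fix u u' assume eq: "perm_of M u = perm_of M u'"
    have "hm u (perm_of M u) = hm u' (perm_of M u')"
      by (rule ex1_same[OF uq[of "(perm_of M u, False)"]]) (use pm[of u] pm[of u'] eq in \<open>simp_all add: mem_hm_False\<close>)
    then show "u = u'" by simp
  qed
  then show "bij (perm_of M)" by (simp add: bij_def finite_UNIV_inj_surj)
  show "M = Mof (perm_of M)"
  proof
    show "Mof (perm_of M) \<subseteq> M" unfolding Mof_def using pm by auto
    show "M \<subseteq> Mof (perm_of M)"
    proof
      fix e assume "e \<in> M"
      obtain a b where ab: "e = hm a b" using range_hm[OF subsetD[OF sub \<open>e \<in> M\<close>]] by blast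
      have "b = perm_of M a" by (rule ex1_same[OF ex[of a]]) (use \<open>e \<in> M\<close> ab pm[of a] in simp_all)
      then show "e \<in> Mof (perm_of M)" unfolding Mof_def using ab by auto
    qed
  qed
qed

lemma red_count:
  fixes p :: "'v::finite \<Rightarrow> 'v"
  shows "card (Mof p \<inter> hat_red UNIV (complete_edges UNIV)) = card {u. p u \<noteq> u}"
proof -
  have "Mof p \<inter> hat_red UNIV (complete_edges UNIV) = (\<lambda>u. hm u (p u)) ` {u. p u \<noteq> u}"
    unfolding Mof_def hat_red_complete by auto
  moreover have "inj_on (\<lambda>u. hm u (p u)) {u. p u \<noteq> u}" by (auto intro: inj_onI)
  ultimately show ?thesis by (simp add: card_image)
qed

definition P0 :: "'v::finite hvec set" where
  "P0 = {incidence (Mof p) | p. bij p \<and> odd (card {u. p u \<noteq> u})}"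

lemma polytope_eq: "odd_pm_polytope UNIV (complete_edges UNIV) = convex hull (P0 :: 'v::finite hvec set)"
proof -
  have "{incidence M | M. perfect_matching (hat_vertices UNIV) (hat_edges UNIV (complete_edges UNIV)) M
                       \<and> odd (card (M \<inter> hat_red UNIV (complete_edges (UNIV::'v set))))} = P0"
    unfolding P0_def
  proof (intro set_eqI iffI)
    fix x assume "x \<in> {incidence M | M. perfect_matching (hat_vertices UNIV) (hat_edges UNIV (complete_edges UNIV)) M
                       \<and> odd (card (M \<inter> hat_red UNIV (complete_edges (UNIV::'v set))))}"
    then obtain M where M: "x = incidence M" "perfect_matching (hat_vertices UNIV) (hat_edges UNIV (complete_edges UNIV)) M"
        "odd (card (M \<inter> hat_red UNIV (complete_edges (UNIV::'v set))))" by blast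
    show "x \<in> {incidence (Mof p) | p. bij p \<and> odd (card {u. p u \<noteq> u})}"
    proof (intro CollectI exI[of _ "perm_of M"] conjI)
      show "x = incidence (Mof (perm_of M))" using M(1) pm_perm(2)[OF M(2)] by simp
      show "bij (perm_of M)" using pm_perm(1)[OF M(2)] .
      show "odd (card {u. perm_of M u \<noteq> u})" using M(3) pm_perm(2)[OF M(2)] red_count[of "perm_of M"] by simp
    qed
  next
    fix x assume "x \<in> {incidence (Mof p) | p. bij p \<and> odd (card {u. (p::'v\<Rightarrow>'v) u \<noteq> u})}"
    then obtain p :: "'v \<Rightarrow> 'v" where "x = incidence (Mof p)" "bij p" "odd (card {u. p u \<noteq> u})" by blast
    show "x \<in> {incidence M | M. perfect_matching (hat_vertices UNIV) (hat_edges UNIV (complete_edges UNIV)) M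
                       \<and> odd (card (M \<inter> hat_red UNIV (complete_edges (UNIV::'v set))))}"
    proof (intro CollectI exI conjI)
      show "x = incidence (Mof p)" by fact
      show "perfect_matching (hat_vertices UNIV) (hat_edges UNIV (complete_edges UNIV)) (Mof p)"
        using perm_pm[OF \<open>bij p\<close>] .
      show "odd (card (Mof p \<inter> hat_red UNIV (complete_edges (UNIV::'v set))))"
        using red_count[of p] \<open>odd _\<close> by simp
    qed
  qed
  then show ?thesis unfolding odd_pm_polytope_def by simp
qed

lemma inner_incidence:
  fixes z :: "'v::finite hvec"
  shows "z \<bullet> incidence (Mof p) = (\<Sum>u\<in>UNIV. z $ hm u (p u))"
proof -
  have "z \<bullet> incidence (Mof p) = (\<Sum>i\<in>UNIV. if i \<in> Mof p then z $ i else 0)"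
    unfolding inner_vec_def incidence_def by (auto intro: sum.cong)
  also have "\<dots> = (\<Sum>i\<in>Mof p. z $ i)" by (simp add: sum.If_cases)
  also have "\<dots> = (\<Sum>u\<in>UNIV. z $ hm u (p u))"
    unfolding Mof_def by (subst sum.reindex) (auto intro: inj_onI)
  finally show ?thesis .
qed

definition ellp :: "nat \<Rightarrow> nat \<Rightarrow> nat \<Rightarrow> nat" where
  "ellp m i j = (let d = nat \<bar>int j - int i\<bar> in if odd d then d else m - d)"

lemma ellp_sym: "ellp m i j = ellp m j i"
  unfolding ellp_def by (simp add: abs_minus_commute)

locale cfg =
  fixes n k :: nat and c :: "nat \<Rightarrow> 'v::finite" and s t :: 'v
  assumes card: "CARD('v) = n" and n5: "n \<ge> 5" and nodd: "odd n" and kdef: "k = (n - 3) div 2"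
    and cinj: "inj_on c {1..2*k+1}" and st: "s \<noteq> t"
    and sC: "s \<notin> c ` {1..2*k+1}" and tC: "t \<notin> c ` {1..2*k+1}"
begin

abbreviation "m \<equiv> 2*k+1"
abbreviation "I \<equiv> {1..m}"
abbreviation "C \<equiv> c ` I"
abbreviation "E \<equiv> complete_edges (UNIV::'v set)"

definition A :: "'v \<Rightarrow> 'v \<Rightarrow> real" where
  "A u v = C_induced_coeff UNIV E c k s t {u,v}"

lemma n_eq: "n = m + 2" using n5 nodd kdef by presburger
lemma k_ge1: "k \<ge> 1" using n5 nodd kdef by presburger
lemma m_ge3: "m \<ge> 3" using k_ge1 by simp

lemma card_C: "card C = m" using cinj by (simp add: card_image)

lemma UNIV_eq: "(UNIV::'v set) = insert s (insert t C)"
proof -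
  have "card (insert s (insert t C)) = m + 2" using sC tC st card_C by simp
  then have "card (insert s (insert t C)) = card (UNIV::'v set)" using card n_eq by simp
  then have "insert s (insert t C) = UNIV" by (intro card_subset_eq) auto
  then show ?thesis by simp
qed

lemma cases_v: obtains "u = s" | "u = t" | i where "i \<in> I" "u = c i"
  using UNIV_eq by blast

lemma c_ne_s[simp]: "i \<in> I \<Longrightarrow> c i \<noteq> s" using sC by blast
lemma c_ne_t[simp]: "i \<in> I \<Longrightarrow> c i \<noteq> t" using tC by blast
lemma c_eq_iff[simp]: "i \<in> I \<Longrightarrow> j \<in> I \<Longrightarrow> c i = c j \<longleftrightarrow> i = j"
  using cinj by (auto dest: inj_onD)

lemma ell_c:
  assumes "i \<in> I" "j \<in> I" "i \<noteq> j"
  shows "ell c k {c i, c j} = ellp m i j"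
proof -
  define P where "P p \<longleftrightarrow> fst p \<in> {1..2*k+1} \<and> snd p \<in> {1..2*k+1}
                                \<and> fst p \<noteq> snd p \<and> {c i, c j} = {c (fst p), c (snd p)}" for p
  have "P (i,j)" unfolding P_def using assms by auto
  then have Pp: "P (SOME p. P p)" by (rule someI)
  define p where "p = (SOME p. P p)"
  have p: "fst p \<in> I" "snd p \<in> I" "{c i, c j} = {c (fst p), c (snd p)}"
    using Pp unfolding P_def p_def by auto
  then have "(fst p = i \<and> snd p = j) \<or> (fst p = j \<and> snd p = i)"
    using assms by (auto simp: doubleton_eq_iff)
  then have d: "nat \<bar>int (snd p) - int (fst p)\<bar> = nat \<bar>int j - int i\<bar>" by auto
  show ?thesis
    unfolding ell_def ellp_def Let_def P_def[symmetric] p_def[symmetric] d ..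
qed

lemma mem_E: "{u,v} \<in> E \<longleftrightarrow> u \<noteq> v" by (rule complete_edges_mem)

lemma A_sym: "A u v = A v u" unfolding A_def by (simp add: insert_commute)

lemma A_st: "A s t = 1"
proof -
  have "{s,t} \<notin> cut_edges E C" unfolding cut_edges_def using sC tC by auto
  moreover have "{s,t} \<notin> induced_edges E (UNIV - {s,t})" unfolding induced_edges_def by auto
  ultimately show ?thesis unfolding A_def C_induced_coeff_def by simp
qed

lemma A_ts: "A t s = 1" using A_st A_sym by simp

lemma A_xc:
  assumes "x = s \<or> x = t" "i \<in> I"
  shows "A x (c i) = k" "A (c i) x = k"
proof -
  have "{x, c i} \<noteq> {s,t}" using assms(1) c_ne_s[OF assms(2)] c_ne_t[OF assms(2)] by (auto simp: doubleton_eq_iff)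
  moreover have "{x, c i} \<in> cut_edges E C"
  proof -
    have "{x, c i} \<inter> C = {c i}" using assms sC tC c_ne_s[OF assms(2)] c_ne_t[OF assms(2)] by auto
    moreover have "x \<noteq> c i" using assms(1) c_ne_s[OF assms(2)] c_ne_t[OF assms(2)] by auto
    ultimately show ?thesis unfolding cut_edges_def by (auto simp: mem_E)
  qed
  moreover have "{x, c i} \<notin> induced_edges E (UNIV - {s,t})" unfolding induced_edges_def using assms by auto
  ultimately show "A x (c i) = k" unfolding A_def C_induced_coeff_def by simp
  then show "A (c i) x = k" using A_sym by simp
qed

lemma A_cc:
  assumes "i \<in> I" "j \<in> I" "i \<noteq> j"
  shows "A (c i) (c j) = ellp m i j"
proof -
  have ne: "c i \<noteq> c j" using assms by simp
  have "{c i, c j} \<noteq> {s,t}" using assms by (auto simp: doubleton_eq_iff)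
  moreover have "{c i, c j} \<notin> cut_edges E C"
  proof -
    have "{c i, c j} \<inter> C = {c i, c j}" using assms by auto
    then show ?thesis unfolding cut_edges_def using ne by auto
  qed
  moreover have "{c i, c j} \<in> induced_edges E (UNIV - {s,t})"
    unfolding induced_edges_def using assms ne by (auto simp: mem_E)
  ultimately show ?thesis unfolding A_def C_induced_coeff_def using ell_c[OF assms] by simp
qed

lemma ellp_pos: "i \<in> I \<Longrightarrow> j \<in> I \<Longrightarrow> i \<noteq> j \<Longrightarrow> ellp m i j \<ge> 1"
  unfolding ellp_def Let_def by (auto split: if_splits)

lemma ellp_adj: "i \<in> I \<Longrightarrow> i < m \<Longrightarrow> ellp m i (i+1) = 1"
  unfolding ellp_def by simp

lemma ellp_wrap: "ellp m m 1 = 1"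
proof -
  have "nat \<bar>int 1 - int m\<bar> = 2*k" by simp
  then show ?thesis unfolding ellp_def Let_def by simp
qed

lemma A_nonneg: "A u v \<ge> 0"
  unfolding A_def C_induced_coeff_def by simp

end

definition h1 :: "'v set \<Rightarrow> ('v \<times> bool) set" where
  "h1 e = {(fst (endpts e), True), (snd (endpts e), False)}"
definition h2 :: "'v set \<Rightarrow> ('v \<times> bool) set" where
  "h2 e = {(fst (endpts e), False), (snd (endpts e), True)}"

definition wvec :: "'v::finite set set \<Rightarrow> ('v set \<Rightarrow> real) \<Rightarrow> 'v hvec" where
  "wvec E a = (\<chi> i. \<Sum>e\<in>E. a e * ((if i = h1 e then 1 else 0) + (if i = h2 e then 1 else 0)))"

lemma canon_inner:
  fixes E :: "'v::finite set set"
  shows "canon_lhs E a y = wvec E a \<bullet> y"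
proof -
  have fE: "finite E" by (rule finite_subset[of _ UNIV]) auto
  have "wvec E a \<bullet> y = (\<Sum>i\<in>UNIV. (\<Sum>e\<in>E. a e * ((if i = h1 e then 1 else 0) + (if i = h2 e then 1 else 0))) * y $ i)"
    unfolding wvec_def inner_vec_def by simp
  also have "\<dots> = (\<Sum>i\<in>UNIV. \<Sum>e\<in>E. a e * ((if i = h1 e then y $ i else 0) + (if i = h2 e then y $ i else 0)))"
    unfolding sum_distrib_right by (intro sum.cong refl) (simp add: algebra_simps)
  also have "\<dots> = (\<Sum>e\<in>E. \<Sum>i\<in>UNIV. a e * ((if i = h1 e then y $ i else 0) + (if i = h2 e then y $ i else 0)))"
    by (rule sum.swap)
  also have "\<dots> = (\<Sum>e\<in>E. a e * (y $ h1 e + y $ h2 e))"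
    by (simp add: sum_distrib_left[symmetric] sum.distrib)
  finally show ?thesis unfolding canon_lhs_def h1_def h2_def by simp
qed

lemma endpts_E:
  assumes "e \<in> complete_edges UNIV"
  shows "e = {fst (endpts e), snd (endpts e)}" "fst (endpts e) \<noteq> snd (endpts e)"
proof -
  from assms obtain u v where uv: "e = {u,v}" "u \<noteq> v" unfolding complete_edges_def by blast
  then have "\<exists>p. e = {fst p, snd p}" by (intro exI[of _ "(u,v)"]) simp
  then show e: "e = {fst (endpts e), snd (endpts e)}" unfolding endpts_def by (rule someI_ex)
  show "fst (endpts e) \<noteq> snd (endpts e)"
  proof
    assume "fst (endpts e) = snd (endpts e)"
    then have "e = {fst (endpts e)}" using e by simp
    with uv show False by (metis doubleton_eq_iff insert_absorb2 singleton_insert_inj_eq)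
  qed
qed

lemma wvec_hm:
  fixes a :: "'v::finite set \<Rightarrow> real"
  shows "wvec (complete_edges UNIV) a $ hm u v = (if u = v then 0 else a {u,v})"
proof -
  have eq: "a e * ((if hm u v = h1 e then 1 else 0) + (if hm u v = h2 e then 1 else 0))
      = (if u \<noteq> v \<and> e = {u,v} then a e else 0)" if "e \<in> complete_edges UNIV" for e
  proof -
    note ep = endpts_E[OF that]
    define x y where "x = fst (endpts e)" "y = snd (endpts e)"
    have h: "h1 e = hm x y" "h2 e = hm y x" unfolding h1_def h2_def hm_def x_y_def by auto
    have exy: "e = {x,y}" "x \<noteq> y" using ep unfolding x_y_def by auto
    show ?thesis unfolding h using exy by (auto simp: doubleton_eq_iff)
  qed
  have "wvec (complete_edges UNIV) a $ hm u v = (\<Sum>e\<in>complete_edges UNIV. if u \<noteq> v \<and> e = {u,v} then a e else 0)"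
    unfolding wvec_def using eq by simp
  also have "\<dots> = (if u = v then 0 else a {u,v})"
  proof (cases "u = v")
    case False
    then have "{u,v} \<in> complete_edges UNIV" by (simp add: complete_edges_mem)
    with False show ?thesis by (simp add: sum.delta' finite_subset[of _ UNIV])
  qed simp
  finally show ?thesis .
qed

lemma canon_Mof:
  fixes a :: "'v::finite set \<Rightarrow> real"
  shows "canon_lhs (complete_edges UNIV) a (incidence (Mof p)) = (\<Sum>u\<in>UNIV. if p u = u then 0 else a {u, p u})"
  unfolding canon_inner inner_incidence wvec_hm by (simp add: eq_commute)

lemma odd_sum_card:
  fixes f :: "'a \<Rightarrow> int"
  assumes "finite S"
  shows "odd (sum f S) \<longleftrightarrow> odd (card {i\<in>S. odd (f i)})"
  using assms
proof (induction S rule: finite_induct)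
  case empty then show ?case by simp
next
  case (insert x S)
  have fin: "finite {i\<in>S. odd (f i)}" using insert by simp
  show ?case
  proof (cases "odd (f x)")
    case True
    then have "{i\<in>insert x S. odd (f i)} = insert x {i\<in>S. odd (f i)}" by auto
    moreover have "x \<notin> {i\<in>S. odd (f i)}" using insert by simp
    ultimately show ?thesis using insert True fin by simp
  next
    case False
    then have "{i\<in>insert x S. odd (f i)} = {i\<in>S. odd (f i)}" by auto
    then show ?thesis using insert False by simp
  qed
qed

lemma w_props:
  fixes m i j :: nat
  assumes "odd m" "i \<in> {1..m}" "j \<in> {1..m}" "j \<noteq> i"
  defines "D \<equiv> int j - int i"
  defines "w \<equiv> (if odd D then D else if D > 0 then D - int m else D + int m)"
  shows "\<bar>w\<bar> = int (ellp m i j)" "odd w" "int m dvd (w - D)"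
proof -
  have b: "D \<noteq> 0" "D < int m" "- D < int m" using assms(2-4) unfolding D_def by auto
  have e: "int (ellp m i j) = (if odd D then \<bar>D\<bar> else int m - \<bar>D\<bar>)"
  proof -
    have "odd (nat \<bar>D\<bar>) \<longleftrightarrow> odd D" by (simp add: even_nat_iff)
    moreover have "int (m - nat \<bar>D\<bar>) = int m - \<bar>D\<bar>" using b by simp
    ultimately show ?thesis unfolding ellp_def Let_def D_def[symmetric] by auto
  qed
  show "\<bar>w\<bar> = int (ellp m i j)" unfolding e w_def using b by auto
  show "odd w" unfolding w_def using assms(1) by auto
  show "int m dvd (w - D)" unfolding w_def by auto
qed

lemma perm_odd_bound:
  fixes m :: nat and \<sigma> :: "nat \<Rightarrow> nat"
  assumes m: "odd m" and bij: "bij_betw \<sigma> {1..m} {1..m}" and od: "odd (card {i\<in>{1..m}. \<sigma> i \<noteq> i})"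
  shows "(\<Sum>i\<in>{1..m}. if \<sigma> i = i then 0 else real (ellp m i (\<sigma> i))) \<ge> m"
proof -
  define D where "D i = int (\<sigma> i) - int i" for i
  define w where "w i = (if \<sigma> i = i then 0 else if odd (D i) then D i else if D i > 0 then D i - int m else D i + int m)" for i
  have sig: "\<sigma> i \<in> {1..m}" if "i \<in> {1..m}" for i using bij that by (auto dest: bij_betw_apply)
  have wp: "\<bar>w i\<bar> = int (ellp m i (\<sigma> i))" "odd (w i)" "int m dvd (w i - D i)"
    if "i \<in> {1..m}" "\<sigma> i \<noteq> i" for i
    using w_props[OF m that(1) sig[OF that(1)] that(2)] that(2) unfolding w_def D_def by auto
  have dv: "int m dvd (w i - D i)" if "i \<in> {1..m}" for i
    using wp(3)[OF that] by (cases "\<sigma> i = i") (auto simp: w_def D_def)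
  have sD: "(\<Sum>i\<in>{1..m}. D i) = 0"
  proof -
    have "(\<Sum>i\<in>{1..m}. int (\<sigma> i)) = (\<Sum>i\<in>{1..m}. int i)"
      using sum.reindex_bij_betw[OF bij, of int] by simp
    then show ?thesis unfolding D_def by (simp add: sum_subtractf)
  qed
  have "int m dvd (\<Sum>i\<in>{1..m}. w i - D i)" by (rule dvd_sum) (use dv in auto)
  then have dvw: "int m dvd sum w {1..m}" using sD by (simp add: sum_subtractf)
  have "{i\<in>{1..m}. odd (w i)} = {i\<in>{1..m}. \<sigma> i \<noteq> i}"
    using wp(2) m by (auto simp: w_def)
  then have "odd (sum w {1..m})" using od odd_sum_card[of "{1..m}" w] by simp
  then have "sum w {1..m} \<noteq> 0" by auto
  then have "\<bar>int m\<bar> \<le> \<bar>sum w {1..m}\<bar>" using dvw by (rule dvd_imp_le_int)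
  also have "\<dots> \<le> (\<Sum>i\<in>{1..m}. \<bar>w i\<bar>)" by (rule sum_abs)
  finally have 1: "int m \<le> (\<Sum>i\<in>{1..m}. \<bar>w i\<bar>)" by simp
  have "(\<Sum>i\<in>{1..m}. if \<sigma> i = i then 0 else real (ellp m i (\<sigma> i))) = real_of_int (\<Sum>i\<in>{1..m}. \<bar>w i\<bar>)"
    unfolding of_int_sum
  proof (rule sum.cong[OF refl])
    fix i assume "i \<in> {1..m}"
    then show "(if \<sigma> i = i then 0 else real (ellp m i (\<sigma> i))) = real_of_int \<bar>w i\<bar>"
      using wp(1)[of i] by (cases "\<sigma> i = i") (auto simp: w_def)
  qed
  with 1 show ?thesis by linarith
qed

context cfg begin

definition cost :: "('v \<Rightarrow> 'v) \<Rightarrow> 'v \<Rightarrow> real" where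
  "cost p u = (if p u = u then 0 else A u (p u))"

lemma canon_cost: "canon_lhs E (C_induced_coeff UNIV E c k s t) (incidence (Mof p)) = (\<Sum>u\<in>UNIV. cost p u)"
  unfolding canon_Mof cost_def A_def by simp

lemma cost_nonneg: "cost p u \<ge> 0" unfolding cost_def using A_nonneg by simp

lemma sum_ge_sub: "(\<Sum>u\<in>S. cost p u) \<le> (\<Sum>u\<in>UNIV. cost p u)"
  by (rule sum_mono2) (auto simp: cost_nonneg)

lemma inC: "u \<noteq> s \<Longrightarrow> u \<noteq> t \<Longrightarrow> u \<in> C" using UNIV_eq by blast

lemma A_xC: assumes "x = s \<or> x = t" "u \<in> C" shows "A x u = k" "A u x = k"
  using assms A_xc by auto

lemma A_CC: assumes "u \<in> C" "v \<in> C" "u \<noteq> v" shows "A u v \<ge> 1"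
proof -
  from assms obtain i j where "i \<in> I" "j \<in> I" "u = c i" "v = c j" by blast
  with assms show ?thesis using A_cc ellp_pos by force
qed

lemma A_xy: assumes "x = s \<or> x = t" "y = s \<or> y = t" "x \<noteq> y" shows "A x y = 1"
  using assms A_st A_ts by auto

lemma s_notC[simp]: "s \<notin> C" and t_notC[simp]: "t \<notin> C" using sC tC by auto

lemma C_bound:
  assumes bij: "bij p" and inv: "\<forall>u\<in>C. p u \<in> C" and od: "odd (card {u\<in>C. p u \<noteq> u})"
  shows "(\<Sum>u\<in>C. cost p u) \<ge> m"
proof -
  define pos where "pos = the_inv_into I c"
  define \<sigma> where "\<sigma> i = pos (p (c i))" for i
  have cs: "c (\<sigma> i) = p (c i)" "\<sigma> i \<in> I" if "i \<in> I" for i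
  proof -
    have "p (c i) \<in> c ` I" using inv that by blast
    then obtain j where j: "j \<in> I" "p (c i) = c j" by (rule imageE) simp
    have sj: "\<sigma> i = j" unfolding \<sigma>_def pos_def j(2) by (rule the_inv_into_f_f[OF cinj j(1)])
    show "c (\<sigma> i) = p (c i)" unfolding sj j(2) ..
    show "\<sigma> i \<in> I" unfolding sj by (rule j(1))
  qed
  have injs: "inj_on \<sigma> I"
  proof (rule inj_onI)
    fix i j assume ij: "i \<in> I" "j \<in> I" "\<sigma> i = \<sigma> j"
    have "p (c i) = c (\<sigma> i)" using cs(1)[OF ij(1)] by simp
    also have "\<dots> = c (\<sigma> j)" using ij(3) by simp
    also have "\<dots> = p (c j)" using cs(1)[OF ij(2)] by simp
    finally have "p (c i) = p (c j)" .
    then have "c i = c j" using bij by (simp add: bij_def inj_eq)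
    then show "i = j" using ij by simp
  qed
  have "\<sigma> ` I = I" by (rule endo_inj_surj) (use cs injs in auto)
  then have bs: "bij_betw \<sigma> I I" using injs by (simp add: bij_betw_def)
  have "{u\<in>C. p u \<noteq> u} = c ` {i\<in>I. \<sigma> i \<noteq> i}"
  proof -
    have "p (c i) \<noteq> c i \<longleftrightarrow> \<sigma> i \<noteq> i" if "i \<in> I" for i using cs[OF that] that by auto
    then show ?thesis by auto
  qed
  moreover have "inj_on c {i\<in>I. \<sigma> i \<noteq> i}" by (rule inj_on_subset[OF cinj]) auto
  ultimately have "card {u\<in>C. p u \<noteq> u} = card {i\<in>I. \<sigma> i \<noteq> i}" by (simp add: card_image)
  with od have od2: "odd (card {i\<in>I. \<sigma> i \<noteq> i})" by simp
  have "(\<Sum>u\<in>C. cost p u) = (\<Sum>i\<in>I. cost p (c i))" using cinj by (simp add: sum.reindex)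
  also have "\<dots> = (\<Sum>i\<in>I. if \<sigma> i = i then 0 else real (ellp m i (\<sigma> i)))"
  proof (rule sum.cong[OF refl])
    fix i assume i: "i \<in> I"
    show "cost p (c i) = (if \<sigma> i = i then 0 else real (ellp m i (\<sigma> i)))"
      unfolding cost_def using cs[OF i] i A_cc[OF i cs(2)[OF i]] by auto
  qed
  finally show ?thesis using perm_odd_bound[OF _ bs od2] by simp
qed

lemma moved_C: "{u. p u \<noteq> u} = {u\<in>C. p u \<noteq> u} \<union> {u\<in>{s,t}. p u \<noteq> u}"
  using UNIV_eq by auto

lemma valid_perm:
  assumes bij: "bij p" and od: "odd (card {u. p u \<noteq> u})"
  shows "(\<Sum>u\<in>UNIV. cost p u) \<ge> m"
proof -
  have inj: "p a = p b \<longleftrightarrow> a = b" for a b using bij by (simp add: bij_def inj_eq)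
  have surj: "\<exists>q. p q = x" for x using bij by (metis bij_pointE)
  have cx: "cost p x = A x (p x)" if "p x \<noteq> x" for x using that by (simp add: cost_def)
  have fin: "finite S" for S :: "'v set" by simp
  have invC: "(\<Sum>u\<in>UNIV. cost p u) \<ge> m" if inv: "\<forall>u\<in>C. p u \<in> C" and o: "odd (card {u\<in>C. p u \<noteq> u})"
    using C_bound[OF bij inv o] sum_ge_sub[where S=C and p=p] by linarith
  have one: "(\<Sum>u\<in>UNIV. cost p u) \<ge> m" if xy: "x = s \<or> x = t" "y = s \<or> y = t" "x \<noteq> y"
     and mx: "p x \<noteq> x" and fy: "p y = y" for x y
  proof -
    have pxC: "p x \<in> C" using mx fy xy inj[of x y] by (intro inC) auto
    obtain q where q: "p q = x" using surj by blast
    have qx: "q \<noteq> x" using q mx by auto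
    have qy: "q \<noteq> y" using q fy xy by auto
    have qC: "q \<in> C" using qx qy xy by (intro inC) auto
    have xm: "x \<in> {u. p u \<noteq> u}" and qm: "q \<in> {u. p u \<noteq> u}" using mx q qx by auto
    have "card ({u. p u \<noteq> u} - {x,q}) = card {u. p u \<noteq> u} - 2" using qx xm qm by (subst card_Diff_subset) auto
    moreover have "card {u. p u \<noteq> u} \<ge> 2"
    proof -
      have "{x,q} \<subseteq> {u. p u \<noteq> u}" using xm qm by blast
      then have "card {x,q} \<le> card {u. p u \<noteq> u}" by (rule card_mono[OF fin])
      then show ?thesis using qx by simp
    qed
    ultimately have "card ({u. p u \<noteq> u} - {x,q}) \<noteq> 0" using od by presburger
    then have "{u. p u \<noteq> u} - {x,q} \<noteq> {}" by (metis card.empty)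
    then obtain u where u: "p u \<noteq> u" "u \<noteq> x" "u \<noteq> q" by blast
    have uy: "u \<noteq> y" using u fy by auto
    have uC: "u \<in> C" using u uy xy by (intro inC) auto
    have puC: "p u \<in> C" using u uy xy inj[of u q] inj[of u y] q fy by (intro inC) auto
    have "cost p x = k" using cx[OF mx] A_xC[OF xy(1) pxC] by simp
    moreover have "cost p q = k" using cx[of q] q qx A_xC[OF xy(1) qC] by simp
    moreover have "cost p u \<ge> 1" using cx[OF u(1)] A_CC[OF uC puC] u by simp
    moreover have "(\<Sum>u\<in>{x,q,u}. cost p u) = cost p x + cost p q + cost p u" using qx u by simp
    ultimately show ?thesis using sum_ge_sub[where S="{x,q,u}" and p=p] by simp
  qed
  have adj: "(\<Sum>u\<in>UNIV. cost p u) \<ge> m" if xy: "x = s \<or> x = t" "y = s \<or> y = t" "x \<noteq> y"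
     and pxy: "p x = y" and pyx: "p y \<noteq> x" for x y
  proof -
    have pyC: "p y \<in> C" using pxy pyx xy inj[of y x] by (intro inC) auto
    obtain q where q: "p q = x" using surj by blast
    have qx: "q \<noteq> x" using q pxy xy by auto
    have qy: "q \<noteq> y" using q pyx by auto
    have qC: "q \<in> C" using qx qy xy by (intro inC) auto
    have "cost p x = 1" using cx[of x] pxy A_xy[OF xy] xy by simp
    moreover have "cost p y = k" using cx[of y] pyC xy A_xC[OF xy(2) pyC] by auto
    moreover have "cost p q = k" using cx[of q] q qx A_xC[OF xy(1) qC] by simp
    moreover have "(\<Sum>u\<in>{x,y,q}. cost p u) = cost p x + cost p y + cost p q" using qx qy xy by simp
    ultimately show ?thesis using sum_ge_sub[where S="{x,y,q}" and p=p] by simp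
  qed
  show ?thesis
  proof (cases "p s = s")
    case ss: True
    show ?thesis
    proof (cases "p t = t")
      case tt: True
      have "\<forall>u\<in>C. p u \<in> C"
      proof
        fix u assume "u \<in> C"
        then have "u \<noteq> s" "u \<noteq> t" using s_notC t_notC by (metis, metis)
        then have "p u \<noteq> p s" "p u \<noteq> p t" using inj by auto
        then show "p u \<in> C" using ss tt by (intro inC) auto
      qed
      moreover have "{u. p u \<noteq> u} = {u\<in>C. p u \<noteq> u}" using moved_C[of p] ss tt by auto
      ultimately show ?thesis using invC od by simp
    next
      case False
      then show ?thesis using one[of t s] ss st by auto
    qed
  next
    case sm: False
    show ?thesis
    proof (cases "p t = t")
      case True
      then show ?thesis using one[of s t] sm st by auto
    next
      case tm: False
      show ?thesis
      proof (cases "p s = t")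
        case pst: True
        show ?thesis
        proof (cases "p t = s")
          case pts: True
          have "\<forall>u\<in>C. p u \<in> C"
          proof
            fix u assume "u \<in> C"
            then have "u \<noteq> s" "u \<noteq> t" using s_notC t_notC by (metis, metis)
            then have "p u \<noteq> p s" "p u \<noteq> p t" using inj by auto
            then show "p u \<in> C" using pst pts by (intro inC) auto
          qed
          moreover have "{u. p u \<noteq> u} = insert s (insert t {u\<in>C. p u \<noteq> u})" using moved_C[of p] sm tm by auto
          moreover have "card (insert s (insert t {u\<in>C. p u \<noteq> u})) = card {u\<in>C. p u \<noteq> u} + 2"
          proof -
            have "s \<notin> {u\<in>C. p u \<noteq> u}" "t \<notin> {u\<in>C. p u \<noteq> u}" using s_notC t_notC by blast+
            then show ?thesis using st by simp
          qed
          ultimately show ?thesis using invC od by simp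
        next
          case False
          then show ?thesis using adj[of s t] pst st by auto
        qed
      next
        case pst: False
        show ?thesis
        proof (cases "p t = s")
          case True
          then show ?thesis using adj[of t s] pst st by auto
        next
          case pts: False
          have psC: "p s \<in> C" using pst sm by (intro inC) auto
          have ptC: "p t \<in> C" using pts tm by (intro inC) auto
          obtain qs where qs: "p qs = s" using surj by blast
          obtain qt where qt: "p qt = t" using surj by blast
          have qsC: "qs \<in> C" using qs sm pts by (intro inC) auto
          have qtC: "qt \<in> C" using qt tm pst by (intro inC) auto
          have qst: "qs \<noteq> qt" using qs qt st by auto
          have "cost p s = k" using cx[OF sm] A_xC[OF _ psC] by simp
          moreover have "cost p t = k" using cx[OF tm] A_xC[OF _ ptC] by simp
          moreover have "cost p qs = k"
          proof -
            have "p qs \<noteq> qs" using qs qsC s_notC by blast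
            then show ?thesis using cx qs A_xC(2)[of s qs] qsC by simp
          qed
          moreover have "cost p qt = k"
          proof -
            have "p qt \<noteq> qt" using qt qtC t_notC by blast
            then show ?thesis using cx qt A_xC(2)[of t qt] qtC by simp
          qed
          moreover have "(\<Sum>u\<in>{s,t,qs,qt}. cost p u) = cost p s + cost p t + cost p qs + cost p qt"
          proof -
            have "qs \<noteq> s" "qs \<noteq> t" "qt \<noteq> s" "qt \<noteq> t" using qsC qtC s_notC t_notC by metis+
            then show ?thesis using qst st by simp
          qed
          ultimately have "(\<Sum>u\<in>UNIV. cost p u) \<ge> 4 * k" using sum_ge_sub[where S="{s,t,qs,qt}" and p=p] by simp
          then show ?thesis using k_ge1 by simp
        qed
      qed
    qed
  qed
qed

end

definition val :: "('v::finite \<Rightarrow> 'v \<Rightarrow> real) \<Rightarrow> ('v \<Rightarrow> 'v) \<Rightarrow> real" where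
  "val L p = (\<Sum>u\<in>UNIV. L u (p u))"

definition mu :: "('v \<Rightarrow> 'v \<Rightarrow> real) \<Rightarrow> 'v \<Rightarrow> 'v \<Rightarrow> real" where
  "mu L u v = L u v - L u u"

lemma val_moved:
  fixes L :: "'v::finite \<Rightarrow> 'v \<Rightarrow> real"
  assumes "{u. p u \<noteq> u} \<subseteq> S"
  shows "val L p = (\<Sum>u\<in>UNIV. L u u) + (\<Sum>u\<in>S. mu L u (p u))"
proof -
  have "val L p = (\<Sum>u\<in>UNIV. L u u + mu L u (p u))" unfolding val_def mu_def by simp
  also have "\<dots> = (\<Sum>u\<in>UNIV. L u u) + (\<Sum>u\<in>UNIV. mu L u (p u))" by (simp add: sum.distrib)
  also have "(\<Sum>u\<in>UNIV. mu L u (p u)) = (\<Sum>u\<in>S. mu L u (p u))"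
  proof (rule sum.mono_neutral_right)
    have "p u = u" if "u \<notin> S" for u using assms that by blast
    then show "\<forall>i\<in>UNIV - S. mu L i (p i) = 0" by (simp add: mu_def)
  qed auto
  finally show ?thesis .
qed

definition cyc3 :: "'v \<Rightarrow> 'v \<Rightarrow> 'v \<Rightarrow> 'v \<Rightarrow> 'v" where
  "cyc3 x y z = (\<lambda>u. if u = x then y else if u = y then z else if u = z then x else u)"

lemma cyc3_props:
  fixes x y z :: "'v::finite"
  assumes "x \<noteq> y" "y \<noteq> z" "x \<noteq> z"
  shows "bij (cyc3 x y z)" "{u. cyc3 x y z u \<noteq> u} = {x,y,z}" "card {u. cyc3 x y z u \<noteq> u} = 3"
    "val L (cyc3 x y z) = (\<Sum>u\<in>UNIV. L u u) + (mu L x y + mu L y z + mu L z x)"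
proof -
  have "cyc3 x z y (cyc3 x y z u) = u" for u unfolding cyc3_def using assms by auto
  then have "inj (cyc3 x y z)" by (metis injI)
  then show "bij (cyc3 x y z)" by (simp add: bij_def finite_UNIV_inj_surj)
  show mv: "{u. cyc3 x y z u \<noteq> u} = {x,y,z}" unfolding cyc3_def using assms by auto
  then show "card {u. cyc3 x y z u \<noteq> u} = 3" using assms by simp
  have "val L (cyc3 x y z) = (\<Sum>u\<in>UNIV. L u u) + (\<Sum>u\<in>{x,y,z}. mu L u (cyc3 x y z u))"
    by (rule val_moved) (simp add: mv)
  also have "(\<Sum>u\<in>{x,y,z}. mu L u (cyc3 x y z u)) = mu L x y + mu L y z + mu L z x"
    using assms by (simp add: cyc3_def)
  finally show "val L (cyc3 x y z) = (\<Sum>u\<in>UNIV. L u u) + (mu L x y + mu L y z + mu L z x)" .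
qed

definition cyc5 :: "'v \<Rightarrow> 'v \<Rightarrow> 'v \<Rightarrow> 'v \<Rightarrow> 'v \<Rightarrow> 'v \<Rightarrow> 'v" where
  "cyc5 a b d e f = (\<lambda>u. if u = a then b else if u = b then d else if u = d then e
                        else if u = e then f else if u = f then a else u)"

lemma cyc5_props:
  fixes a b d e f :: "'v::finite"
  assumes "distinct [a,b,d,e,f]"
  shows "bij (cyc5 a b d e f)" "{u. cyc5 a b d e f u \<noteq> u} = {a,b,d,e,f}" "card {u. cyc5 a b d e f u \<noteq> u} = 5"
    "val L (cyc5 a b d e f) = (\<Sum>u\<in>UNIV. L u u) + (mu L a b + mu L b d + mu L d e + mu L e f + mu L f a)"
proof -
  have ne: "a \<noteq> b" "a \<noteq> d" "a \<noteq> e" "a \<noteq> f" "b \<noteq> d" "b \<noteq> e" "b \<noteq> f" "d \<noteq> e" "d \<noteq> f" "e \<noteq> f"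
    using assms by auto
  have v: "cyc5 a b d e f a = b" "cyc5 a b d e f b = d" "cyc5 a b d e f d = e" "cyc5 a b d e f e = f" "cyc5 a b d e f f = a"
    unfolding cyc5_def using ne by simp_all
  have v0: "cyc5 a b d e f u = u" if "u \<notin> {a,b,d,e,f}" for u
    unfolding cyc5_def using that by simp
  have "surj (cyc5 a b d e f)"
  proof (rule surjI)
    fix y
    show "cyc5 a b d e f (if y = b then a else if y = d then b else if y = e then d else if y = f then e else if y = a then f else y) = y"
      using v v0[of y] by auto
  qed
  then show "bij (cyc5 a b d e f)" by (simp add: bij_def finite_UNIV_surj_inj)
  show mv: "{u. cyc5 a b d e f u \<noteq> u} = {a,b,d,e,f}"
  proof
    show "{u. cyc5 a b d e f u \<noteq> u} \<subseteq> {a,b,d,e,f}" using v0 by blast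
    show "{a,b,d,e,f} \<subseteq> {u. cyc5 a b d e f u \<noteq> u}" using v ne by auto
  qed
  then show "card {u. cyc5 a b d e f u \<noteq> u} = 5" using ne by simp
  have "val L (cyc5 a b d e f) = (\<Sum>u\<in>UNIV. L u u) + (\<Sum>u\<in>{a,b,d,e,f}. mu L u (cyc5 a b d e f u))"
    by (rule val_moved) (simp add: mv)
  also have "(\<Sum>u\<in>{a,b,d,e,f}. mu L u (cyc5 a b d e f u)) = mu L a b + mu L b d + mu L d e + mu L e f + mu L f a"
    using ne by (simp add: v algebra_simps)
  finally show "val L (cyc5 a b d e f) = (\<Sum>u\<in>UNIV. L u u) + (mu L a b + mu L b d + mu L d e + mu L e f + mu L f a)" .
qed

context cfg begin

definition nx :: "nat \<Rightarrow> nat" where "nx i = (if i = m then 1 else i + 1)"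
definition pr :: "nat \<Rightarrow> nat" where "pr i = (if i = 1 then m else i - 1)"
definition pos :: "'v \<Rightarrow> nat" where "pos = the_inv_into I c"

lemma pos_c[simp]: "i \<in> I \<Longrightarrow> pos (c i) = i"
  unfolding pos_def by (rule the_inv_into_f_f[OF cinj])

lemma nx_I: "i \<in> I \<Longrightarrow> nx i \<in> I" unfolding nx_def by auto
lemma pr_I: "i \<in> I \<Longrightarrow> pr i \<in> I" unfolding pr_def by (cases "i = 1") auto
lemma nx_pr: "i \<in> I \<Longrightarrow> nx (pr i) = i" unfolding nx_def pr_def by (cases "i = 1") auto
lemma nx_ne: "i \<in> I \<Longrightarrow> nx i \<noteq> i" unfolding nx_def using k_ge1 by (cases "i = m") simp_all

lemma pr_nx: "i \<in> I \<Longrightarrow> pr (nx i) = i" unfolding nx_def pr_def by (cases "i = m") auto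

lemma nx_bij: "bij_betw nx I I"
  unfolding bij_betw_def
proof
  show "inj_on nx I"
  proof (rule inj_onI)
    fix i j assume ij: "i \<in> I" "j \<in> I" "nx i = nx j"
    have "i = pr (nx i)" using pr_nx[OF ij(1)] by simp
    also have "\<dots> = pr (nx j)" using ij(3) by simp
    also have "\<dots> = j" using pr_nx[OF ij(2)] by simp
    finally show "i = j" .
  qed
  show "nx ` I = I"
  proof
    show "nx ` I \<subseteq> I" by (rule image_subsetI[OF nx_I])
    show "I \<subseteq> nx ` I"
    proof
      fix i assume i: "i \<in> I"
      have "i = nx (pr i)" using nx_pr[OF i] by simp
      then show "i \<in> nx ` I" using pr_I[OF i] by (rule image_eqI)
    qed
  qed
qed

lemma sum_nx: "(\<Sum>i\<in>I. g (nx i)) = (\<Sum>i\<in>I. g i)"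
  using sum.reindex_bij_betw[OF nx_bij, of g] by simp

definition rot :: "'v \<Rightarrow> 'v" where
  "rot u = (if u \<in> C then c (nx (pos u)) else u)"

lemma rot_c: "i \<in> I \<Longrightarrow> rot (c i) = c (nx i)" unfolding rot_def by auto

lemma rot_props:
  "bij rot" "{u. rot u \<noteq> u} = C" "card {u. rot u \<noteq> u} = m"
  "val L rot = (\<Sum>u\<in>UNIV. L u u) + (\<Sum>i\<in>I. mu L (c i) (c (nx i)))"
proof -
  have "surj rot"
  proof (rule surjI)
    fix u
    show "rot (if u \<in> C then c (pr (pos u)) else u) = u"
    proof (cases "u \<in> C")
      case True
      then obtain i where i: "i \<in> I" "u = c i" by blast
      then show ?thesis using rot_c[OF pr_I[OF i(1)]] nx_pr[OF i(1)] by simp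
    next
      case False
      then show ?thesis unfolding rot_def by simp
    qed
  qed
  then show "bij rot" by (simp add: bij_def finite_UNIV_surj_inj)
  show mv: "{u. rot u \<noteq> u} = C"
  proof
    show "{u. rot u \<noteq> u} \<subseteq> C" unfolding rot_def by auto
    show "C \<subseteq> {u. rot u \<noteq> u}"
    proof
      fix u assume "u \<in> C"
      then obtain i where i: "i \<in> I" "u = c i" by blast
      have "c (nx i) \<noteq> c i" using nx_ne[OF i(1)] nx_I[OF i(1)] i(1) by simp
      then show "u \<in> {u. rot u \<noteq> u}" using rot_c[OF i(1)] i by simp
    qed
  qed
  then show "card {u. rot u \<noteq> u} = m" using card_C by simp
  have "val L rot = (\<Sum>u\<in>UNIV. L u u) + (\<Sum>u\<in>C. mu L u (rot u))"
    by (rule val_moved) (simp add: mv)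
  also have "(\<Sum>u\<in>C. mu L u (rot u)) = (\<Sum>i\<in>I. mu L (c i) (rot (c i)))"
    using cinj by (simp add: sum.reindex)
  also have "\<dots> = (\<Sum>i\<in>I. mu L (c i) (c (nx i)))" by (rule sum.cong) (auto simp: rot_c)
  finally show "val L rot = (\<Sum>u\<in>UNIV. L u u) + (\<Sum>i\<in>I. mu L (c i) (c (nx i)))" .
qed

end

lemma C_lemma:
  fixes \<delta> :: "nat \<Rightarrow> nat \<Rightarrow> real" and m :: nat
  assumes m: "odd m" "m \<ge> 3"
    and adj: "\<And>i. 1 \<le> i \<Longrightarrow> i < m \<Longrightarrow> \<delta> i (i+1) = 0"
    and wrap: "\<delta> 1 m = 0"
    and tri: "\<And>a b d. 1 \<le> a \<Longrightarrow> a < b \<Longrightarrow> b < d \<Longrightarrow> d \<le> m \<Longrightarrow> odd (b-a) \<Longrightarrow> odd (d-b)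
                \<Longrightarrow> \<delta> a d = \<delta> a b + \<delta> b d"
    and ij: "1 \<le> i" "i < j" "j \<le> m"
  shows "\<delta> i j = 0"
proof -
  have shift: "\<delta> (i+1) (i+1+d) = \<delta> i (i+d)" if "odd d" "1 \<le> i" "i+1+d \<le> m" for i d
  proof -
    have d1: "d \<ge> 1" using that(1) by presburger
    have "\<delta> i (i+1+d) = \<delta> i (i+1) + \<delta> (i+1) (i+1+d)"
      by (rule tri) (use that d1 in auto)
    moreover have "\<delta> i (i+1+d) = \<delta> i (i+d) + \<delta> (i+d) (i+d+1)"
      using tri[of i "i+d" "i+1+d"] that d1 by (simp add: add.commute add.left_commute)
    moreover have "\<delta> i (i+1) = 0" using adj that by simp
    moreover have "\<delta> (i+d) (i+d+1) = 0" using adj that d1 by simp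
    ultimately show ?thesis by simp
  qed
  have z12: "\<delta> 1 2 = 0" using adj[of 1] m by (simp add: numeral_2_eq_2)
  define h where "h d = \<delta> 1 (1+d)" for d
  have hi0: "odd d \<Longrightarrow> i+d \<le> m \<Longrightarrow> \<delta> i (i+d) = h d" if "1 \<le> i" for i d
    using that
  proof (induction i rule: dec_induct)
    case base then show ?case by (simp add: h_def)
  next
    case (step i)
    then have "\<delta> i (i+d) = h d" by simp
    moreover have "\<delta> (i+1) (i+1+d) = \<delta> i (i+d)" using shift[of d i] step by simp
    ultimately show ?case by (simp add: add.commute add.left_commute)
  qed
  have hi: "\<delta> i (i+d) = h d" if "odd d" "1 \<le> i" "i+d \<le> m" for i d
    using hi0[OF that(2) that(1,3)] .
  have add: "h (d1+d2-1) = h d1 + h d2" if "odd d1" "odd d2" "1+d1+d2 \<le> m" for d1 d2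
  proof -
    have p1: "d1 \<ge> 1" "d2 \<ge> 1" using that by presburger+
    have "\<delta> 1 (1+d1+d2) = \<delta> 1 (1+d1) + \<delta> (1+d1) (1+d1+d2)"
      by (rule tri) (use that p1 in auto)
    also have "\<delta> (1+d1) (1+d1+d2) = h d2" using hi[of d2 "1+d1"] that by simp
    finally have e1: "\<delta> 1 (1+d1+d2) = h d1 + h d2" by (simp add: h_def)
    have "\<delta> 1 (1+d1+d2) = \<delta> 1 2 + \<delta> 2 (1+d1+d2)"
      by (rule tri) (use that p1 in auto)
    also have "\<delta> 2 (1+d1+d2) = h (d1+d2-1)" using hi[of "d1+d2-1" 2] that p1 by simp
    finally show ?thesis using e1 z12 by simp
  qed
  have lin: "h (2*j+1) = real j * h 3" if "2*j+1 \<le> m - 2" for j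
    using that
  proof (induction j)
    case 0 then show ?case using z12 by (simp add: h_def numeral_2_eq_2)
  next
    case (Suc j)
    have e: "2 * Suc j + 1 = 2*j+1+3-1" by simp
    have h1: "h (2 * Suc j + 1) = h (2*j+1) + h 3" unfolding e by (rule add) (use Suc.prems in auto)
    have IH: "h (2*j+1) = real j * h 3" using Suc by simp
    show ?case by (simp only: h1 IH of_nat_Suc) (simp add: algebra_simps)
  qed
  have "h (m-2) = 0"
  proof -
    have "\<delta> 1 m = \<delta> 1 2 + \<delta> 2 m" by (rule tri) (use m in auto)
    moreover have "\<delta> 2 m = h (m-2)"
    proof -
      have "odd (m-2)" using m by presburger
      moreover have "2 + (m-2) = m" using m by simp
      ultimately show ?thesis using hi[of "m-2" 2] by simp
    qed
    ultimately show ?thesis using wrap z12 by simp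
  qed
  moreover obtain r where r: "m = 2*r+1" using m(1) by (rule oddE)
  moreover have "m - 2 = 2 * (r - 1) + 1" using r m(2) by simp
  ultimately have "real (r - 1) * h 3 = 0" using lin[of "r - 1"] by simp
  then have "r - 1 = 0 \<or> h 3 = 0" by simp
  moreover have "r - 1 = 0 \<Longrightarrow> m = 3" using r m(2) by simp
  ultimately have h3: "m = 3 \<or> h 3 = 0" by blast
  have hz: "h d = 0" if od: "odd d" and dle: "d \<le> m - 2" for d
  proof -
    obtain j where j: "d = 2*j+1" using od by (rule oddE)
    show ?thesis
    proof (cases "m = 3")
      case True
      then have "d = 1" using dle j by simp
      then show ?thesis using z12 by (simp add: h_def numeral_2_eq_2)
    next
      case False
      then have "h 3 = 0" using h3 by simp
      moreover have "2*j+1 \<le> m - 2" using j dle by simp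
      ultimately show ?thesis using lin[of j] j by simp
    qed
  qed
  show ?thesis
  proof (cases "odd (j - i)")
    case True
    have "j - i \<le> m - 2" using True ij m by presburger
    then show ?thesis using hi[of "j-i" i] hz[of "j-i"] True ij by simp
  next
    case False
    have "i + 1 < j" using False ij by presburger
    then have "\<delta> i j = \<delta> i (i+1) + \<delta> (i+1) j" by (intro tri) (use False ij in auto)
    moreover have "\<delta> (i+1) j = h (j - i - 1)"
    proof -
      have "odd (j-i-1)" "(i+1) + (j-i-1) = j" using False ij by presburger+
      then show ?thesis using hi[of "j-i-1" "i+1"] ij by simp
    qed
    moreover have "j - i - 1 \<le> m - 2" using ij by simp
    moreover have "odd (j - i - 1)" using False ij by presburger
    ultimately show ?thesis using adj[of i] ij hz[of "j-i-1"] by simp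
  qed
qed

lemma alt_zero:
  fixes f :: "nat \<Rightarrow> real"
  assumes m: "odd m" "m \<ge> 1" and st: "\<And>i. 1 \<le> i \<Longrightarrow> i < m \<Longrightarrow> f (i+1) = - f i" and w: "f 1 = - f m"
    and i: "1 \<le> i" "i \<le> m"
  shows "f i = 0"
proof -
  have g0: "i \<le> m \<Longrightarrow> f i = (-1)^(i-1) * f 1" if "1 \<le> i" for i
    using that
  proof (induction i rule: dec_induct)
    case base then show ?case by simp
  next
    case (step i)
    then have "f (i+1) = - f i" using st by simp
    moreover have "f i = (-1)^(i-1) * f 1" using step by simp
    ultimately show ?case using step(1) by (cases i) auto
  qed
  have g: "f i = (-1)^(i-1) * f 1" if "1 \<le> i" "i \<le> m" for i using g0 that by blast
  have "f m = f 1" using g[of m] m by (simp add: neg_one_even_power)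
  with w have "f 1 = 0" by simp
  then show ?thesis using g[OF i] by simp
qed

context cfg begin

lemma nx_lt: "1 \<le> i \<Longrightarrow> i < m \<Longrightarrow> nx i = i + 1" unfolding nx_def by simp
lemma nx_m: "nx m = 1" unfolding nx_def by simp

lemma core_mu:
  fixes M :: "'v \<Rightarrow> 'v \<Rightarrow> real" and K :: real
  assumes M0: "\<And>u. M u u = 0"
    and H1a: "\<And>i. i \<in> I \<Longrightarrow> M s t + M t (c i) + M (c i) s = K"
    and H1b: "\<And>i. i \<in> I \<Longrightarrow> M s (c i) + M (c i) t + M t s = K"
    and H2a: "\<And>x i. x = s \<or> x = t \<Longrightarrow> i \<in> I \<Longrightarrow> M x (c i) + M (c i) (c (nx i)) + M (c (nx i)) x = K"
    and H2b: "\<And>x i. x = s \<or> x = t \<Longrightarrow> i \<in> I \<Longrightarrow> M x (c (nx i)) + M (c (nx i)) (c i) + M (c i) x = K"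
    and H3a: "\<And>a b d. 1 \<le> a \<Longrightarrow> a < b \<Longrightarrow> b < d \<Longrightarrow> d \<le> m \<Longrightarrow> odd (b-a) \<Longrightarrow> odd (d-b)
               \<Longrightarrow> M (c a) (c b) + M (c b) (c d) + M (c d) (c a) = K"
    and H3b: "\<And>a b d. 1 \<le> a \<Longrightarrow> a < b \<Longrightarrow> b < d \<Longrightarrow> d \<le> m \<Longrightarrow> odd (b-a) \<Longrightarrow> odd (d-b)
               \<Longrightarrow> M (c a) (c d) + M (c d) (c b) + M (c b) (c a) = K"
    and H4: "(\<Sum>i\<in>I. M (c i) (c (nx i))) = K"
    and H5: "M s (c 1) + M (c 1) t + M t (c 2) + M (c 2) (c 3) + M (c 3) s = K"
  shows "K = 0 \<and> (\<forall>u v. M u v = (M s v - M v s)/2 - (M s u - M u s)/2)"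
proof -
  define \<phi> where "\<phi> v = (M s v - M v s)/2" for v
  define e where "e = M s t + M t s"
  define Aa where "Aa i = M s (c i) + M (c i) s" for i
  define Bb where "Bb i = M t (c i) + M (c i) t" for i
  define D where "D i = M (c i) (c (nx i)) + M (c (nx i)) (c i)" for i
  have phis: "\<phi> s = 0" unfolding \<phi>_def using M0 by simp
  have S1: "M t (c i) - M (c i) t = 2 * (\<phi> (c i) - \<phi> t)" if "i \<in> I" for i
    using H1a[OF that] H1b[OF that] unfolding \<phi>_def by argo
  have S2: "M (c i) (c (nx i)) - M (c (nx i)) (c i) = 2 * (\<phi> (c (nx i)) - \<phi> (c i))" if "i \<in> I" for i
    using H2a[OF disjI1[OF refl] that] H2b[OF disjI1[OF refl] that] unfolding \<phi>_def by argo
  have S3a: "e + Bb i + Aa i = 2*K" if "i \<in> I" for i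
    using H1a[OF that] H1b[OF that] unfolding e_def Aa_def Bb_def by argo
  have S3b: "Aa i + D i + Aa (nx i) = 2*K" "Bb i + D i + Bb (nx i) = 2*K" if "i \<in> I" for i
    using H2a[of s i] H2b[of s i] H2a[of t i] H2b[of t i] that unfolding Aa_def Bb_def D_def by simp_all
  have AB: "Aa i = Bb i" if "i \<in> I" for i
  proof -
    define f where "f i = Aa i - Bb i" for i
    have "f i = 0"
    proof (rule alt_zero[of m f i])
      show "odd m" "m \<ge> 1" by simp_all
      show "f (j+1) = - f j" if "1 \<le> j" "j < m" for j
        using S3b[of j] nx_lt[OF that] that unfolding f_def by simp
      show "f 1 = - f m" using S3b[of m] nx_m unfolding f_def by simp
      show "1 \<le> i" "i \<le> m" using that by auto
    qed
    then show ?thesis unfolding f_def by simp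
  qed
  have Av: "Aa i = K - e/2" "Bb i = K - e/2" "D i = e" if "i \<in> I" for i
  proof -
    show "Aa i = K - e/2" using S3a[OF that] AB[OF that] by simp
    then show "Bb i = K - e/2" using AB[OF that] by simp
    have "Aa (nx i) = K - e/2" using S3a[OF nx_I[OF that]] AB[OF nx_I[OF that]] by simp
    then show "D i = e" using S3b(1)[OF that] \<open>Aa i = K - e/2\<close> by simp
  qed
  have S4: "K = real m * e / 2"
  proof -
    have "M (c i) (c (nx i)) = e/2 + (\<phi> (c (nx i)) - \<phi> (c i))" if "i \<in> I" for i
      using S2[OF that] Av(3)[OF that] unfolding D_def by simp
    then have "K = (\<Sum>i\<in>I. e/2 + (\<phi> (c (nx i)) - \<phi> (c i)))" using H4 by simp
    also have "\<dots> = real m * (e/2) + ((\<Sum>i\<in>I. \<phi> (c (nx i))) - (\<Sum>i\<in>I. \<phi> (c i)))"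
      by (simp add: sum.distrib sum_subtractf)
    also have "(\<Sum>i\<in>I. \<phi> (c (nx i))) = (\<Sum>i\<in>I. \<phi> (c i))" by (rule sum_nx)
    finally show ?thesis by simp
  qed
  have I123: "1 \<in> I" "2 \<in> I" "3 \<in> I" using m_ge3 by auto
  have nx12: "nx 1 = 2" "nx 2 = 3" using m_ge3 nx_lt[of 1] nx_lt[of 2] by auto
  have S5: "K = e/2"
  proof -
    have a1: "Aa 1 = K - e/2" "Bb 1 = K - e/2" "Bb 2 = K - e/2" "Aa 3 = K - e/2" "D 2 = e"
      using Av I123 by auto
    have s1: "M t (c 1) - M (c 1) t = 2 * (\<phi> (c 1) - \<phi> t)" "M t (c 2) - M (c 2) t = 2 * (\<phi> (c 2) - \<phi> t)"
      using S1 I123 by auto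
    have s2: "M (c 2) (c 3) - M (c 3) (c 2) = 2 * (\<phi> (c 3) - \<phi> (c 2))" using S2[of 2] nx12 I123 by simp
    show ?thesis using H5 a1 s1 s2 unfolding Aa_def Bb_def D_def \<phi>_def e_def nx12 by argo
  qed
  have e0: "e = 0"
  proof -
    have "(real m - 1) * e = 0" using S4 S5 by (simp add: algebra_simps)
    moreover have "real m - 1 \<noteq> 0" using m_ge3 by simp
    ultimately show ?thesis by simp
  qed
  have K0: "K = 0" using S5 e0 by simp
  have Wc: "M (c i) (c j) - M (c j) (c i) = 2 * (\<phi> (c j) - \<phi> (c i))" if "1 \<le> i" "i < j" "j \<le> m" for i j
  proof -
    define \<delta> where "\<delta> a b = (M (c a) (c b) - M (c b) (c a))/2 - (\<phi> (c b) - \<phi> (c a))" for a b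
    have "\<delta> i j = 0"
    proof (rule C_lemma[of m \<delta>])
      show "odd m" "m \<ge> 3" using m_ge3 by simp_all
      show "\<delta> a (a+1) = 0" if "1 \<le> a" "a < m" for a
        using S2[of a] nx_lt[OF that] that unfolding \<delta>_def by simp
      show "\<delta> 1 m = 0" using S2[of m] nx_m unfolding \<delta>_def by simp
      show "\<delta> a d = \<delta> a b + \<delta> b d" if "1 \<le> a" "a < b" "b < d" "d \<le> m" "odd (b-a)" "odd (d-b)" for a b d
        using H3a[OF that] H3b[OF that] unfolding \<delta>_def by argo
    qed (use that in auto)
    then show ?thesis unfolding \<delta>_def by simp
  qed
  have Nc: "M (c i) (c j) + M (c j) (c i) = 0" if "1 \<le> i" "i < j" "j \<le> m" for i j
  proof -
    define \<delta> where "\<delta> a b = (if odd (b - a) then 1 else -1) * (M (c a) (c b) + M (c b) (c a))" for a b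
    have "\<delta> i j = 0"
    proof (rule C_lemma[of m \<delta>])
      show "odd m" "m \<ge> 3" using m_ge3 by simp_all
      show "\<delta> a (a+1) = 0" if "1 \<le> a" "a < m" for a
        using Av(3)[of a] nx_lt[OF that] that e0 unfolding \<delta>_def D_def by simp
      show "\<delta> 1 m = 0"
      proof -
        have "even (m - 1)" by simp
        then show ?thesis using Av(3)[of m] nx_m e0 unfolding \<delta>_def D_def by (simp add: add.commute)
      qed
      show "\<delta> a d = \<delta> a b + \<delta> b d" if "1 \<le> a" "a < b" "b < d" "d \<le> m" "odd (b-a)" "odd (d-b)" for a b d
      proof -
        have "even (d - a)" using that by presburger
        then show ?thesis using H3a[OF that] H3b[OF that] that K0 unfolding \<delta>_def by simp
      qed
    qed (use that in auto)
    then show ?thesis unfolding \<delta>_def by (simp split: if_splits)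
  qed
  have NW: "M u v + M v u = 0 \<and> M u v - M v u = 2 * (\<phi> v - \<phi> u)" for u v
  proof -
    have base: "M u v + M v u = 0 \<and> M u v - M v u = 2 * (\<phi> v - \<phi> u)"
      if "(u = s \<and> v = t) \<or> (u = s \<and> v \<in> C) \<or> (u = t \<and> v \<in> C) \<or> (\<exists>i j. 1 \<le> i \<and> i < j \<and> j \<le> m \<and> u = c i \<and> v = c j)" for u v
      using that
    proof (elim disjE conjE exE)
      assume "u = s" "v = t"
      then show ?thesis using e0 phis unfolding e_def \<phi>_def by simp
    next
      assume "u = s" "v \<in> C"
      then obtain i where "i \<in> I" "v = c i" by blast
      then show ?thesis using Av(1)[of i] K0 e0 phis \<open>u = s\<close> unfolding Aa_def \<phi>_def by simp
    next
      assume "u = t" "v \<in> C"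
      then obtain i where "i \<in> I" "v = c i" by blast
      then show ?thesis using Av(2)[of i] K0 e0 S1[of i] \<open>u = t\<close> unfolding Bb_def by simp
    next
      fix i j assume "1 \<le> i" "i < j" "j \<le> m" "u = c i" "v = c j"
      then show ?thesis using Wc[of i j] Nc[of i j] by simp
    qed
    have "u = v \<or> (u = s \<and> v = t) \<or> (v = s \<and> u = t) \<or> (u = s \<and> v \<in> C) \<or> (v = s \<and> u \<in> C)
          \<or> (u = t \<and> v \<in> C) \<or> (v = t \<and> u \<in> C)
          \<or> (\<exists>i j. 1 \<le> i \<and> i < j \<and> j \<le> m \<and> u = c i \<and> v = c j)
          \<or> (\<exists>i j. 1 \<le> i \<and> i < j \<and> j \<le> m \<and> v = c i \<and> u = c j)"
    proof -
      have "u \<in> insert s (insert t C)" "v \<in> insert s (insert t C)" using UNIV_eq by auto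
      moreover have "u = v \<or> (\<exists>i j. 1 \<le> i \<and> i < j \<and> j \<le> m \<and> u = c i \<and> v = c j)
          \<or> (\<exists>i j. 1 \<le> i \<and> i < j \<and> j \<le> m \<and> v = c i \<and> u = c j)" if uC: "u \<in> C" and vC: "v \<in> C"
      proof -
        obtain i j where "i \<in> I" "j \<in> I" "u = c i" "v = c j" using uC vC by blast
        then show ?thesis by (cases i j rule: linorder_cases) auto
      qed
      ultimately show ?thesis by blast
    qed
    then show ?thesis
    proof (elim disjE)
      assume "u = v" then show ?thesis using M0 by simp
    qed (use base[of u v] base[of v u] in auto)
  qed
  show ?thesis
  proof (intro conjI allI K0)
    fix u v
    show "M u v = (M s v - M v s)/2 - (M s u - M u s)/2"
      using NW[of u v] unfolding \<phi>_def by argo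
  qed
qed

end

context cfg begin

definition Qt :: "('v \<Rightarrow> 'v) set" where
  "Qt = {cyc3 s t (c i) | i. i \<in> I} \<union> {cyc3 s (c i) t | i. i \<in> I}
      \<union> {cyc3 x (c i) (c (nx i)) | x i. (x = s \<or> x = t) \<and> i \<in> I}
      \<union> {cyc3 x (c (nx i)) (c i) | x i. (x = s \<or> x = t) \<and> i \<in> I}
      \<union> {cyc3 (c a) (c b) (c d) | a b d. 1 \<le> a \<and> a < b \<and> b < d \<and> d \<le> m \<and> odd (b-a) \<and> odd (d-b)}
      \<union> {cyc3 (c a) (c d) (c b) | a b d. 1 \<le> a \<and> a < b \<and> b < d \<and> d \<le> m \<and> odd (b-a) \<and> odd (d-b)}
      \<union> {rot}"

definition p5 :: "'v \<Rightarrow> 'v" where "p5 = cyc5 s (c 1) t (c 2) (c 3)"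

definition LA :: "'v \<Rightarrow> 'v \<Rightarrow> real" where "LA u v = (if u = v then 0 else A u v)"

lemma val_LA: "val LA p = (\<Sum>u\<in>UNIV. cost p u)"
  unfolding val_def LA_def cost_def by (intro sum.cong refl) auto

lemma LA_diag: "(\<Sum>u\<in>UNIV. LA u u) = 0" unfolding LA_def by simp

lemma mu_LA: "u \<noteq> v \<Longrightarrow> mu LA u v = A u v" unfolding mu_def LA_def by simp

lemma ellp_lt: "a < b \<Longrightarrow> ellp m a b = (if odd (b-a) then b-a else m-(b-a))"
proof -
  assume "a < b"
  then have e: "nat \<bar>int b - int a\<bar> = b - a" by simp
  show ?thesis unfolding ellp_def Let_def e by (rule refl)
qed

lemma ellp_nx: "i \<in> I \<Longrightarrow> ellp m i (nx i) = 1"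
  using ellp_adj ellp_wrap unfolding nx_def by auto

lemma tri_dist:
  assumes "1 \<le> a" "a < b" "b < d" "d \<le> m"
  shows "c a \<noteq> c b" "c b \<noteq> c d" "c a \<noteq> c d" "a \<in> I" "b \<in> I" "d \<in> I"
  using assms by auto

lemma ci_cnx: "i \<in> I \<Longrightarrow> c i \<noteq> c (nx i)" by (metis c_eq_iff nx_I nx_ne)

lemma I123: "1 \<in> I" "2 \<in> I" "3 \<in> I" using m_ge3 by auto

lemma p5_dist: "distinct [s, c 1, t, c 2, c 3]"
proof -
  have "c 1 \<noteq> c 2" "c 1 \<noteq> c 3" "c 2 \<noteq> c 3"
    using c_eq_iff[OF I123(1) I123(2)] c_eq_iff[OF I123(1) I123(3)] c_eq_iff[OF I123(2) I123(3)] by simp_all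
  moreover have "s \<noteq> c 1" "s \<noteq> c 2" "s \<noteq> c 3" "t \<noteq> c 1" "t \<noteq> c 2" "t \<noteq> c 3"
    using c_ne_s[OF I123(1)] c_ne_s[OF I123(2)] c_ne_s[OF I123(3)]
    c_ne_t[OF I123(1)] c_ne_t[OF I123(2)] c_ne_t[OF I123(3)] by metis+
  ultimately show ?thesis using st by (simp only: distinct.simps set_simps insert_iff empty_iff) blast
qed

lemma A_tri: "x = s \<or> x = t \<Longrightarrow> u \<in> C \<Longrightarrow> A x u = k \<and> A u x = k" using A_xC by auto

lemma Qt_props:
  assumes "p \<in> Qt"
  shows "bij p" "odd (card {u. p u \<noteq> u})" "(\<Sum>u\<in>UNIV. cost p u) = m"
proof -
  have "(bij p \<and> odd (card {u. p u \<noteq> u})) \<and> (\<Sum>u\<in>UNIV. cost p u) = m"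
    using assms unfolding Qt_def
  proof (elim UnE CollectE exE conjE)
    fix i assume p: "p = cyc3 s t (c i)" and i: "i \<in> I"
    have d: "s \<noteq> t" "t \<noteq> c i" "s \<noteq> c i" using st c_ne_s[OF i] c_ne_t[OF i] by auto
    show ?thesis using cyc3_props(1-3)[OF d] cyc3_props(4)[OF d, where L=LA] val_LA[of p] A_st A_xc[of t i] A_xc[of s i] i d
      unfolding p by (simp add: LA_diag mu_LA)
  next
    fix i assume p: "p = cyc3 s (c i) t" and i: "i \<in> I"
    have d: "s \<noteq> c i" "c i \<noteq> t" "s \<noteq> t" using st c_ne_s[OF i] c_ne_t[OF i] by auto
    show ?thesis using cyc3_props(1-3)[OF d] cyc3_props(4)[OF d, where L=LA] val_LA[of p] A_ts A_xc[of t i] A_xc[of s i] i d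
      unfolding p by (simp add: LA_diag mu_LA)
  next
    fix x i assume p: "p = cyc3 x (c i) (c (nx i))" and x: "x = s \<or> x = t" and i: "i \<in> I"
    have d: "x \<noteq> c i" "c i \<noteq> c (nx i)" "x \<noteq> c (nx i)" using x c_ne_s[OF i] c_ne_t[OF i] c_ne_s[OF nx_I[OF i]] c_ne_t[OF nx_I[OF i]] ci_cnx[OF i] by auto
    show ?thesis using cyc3_props(1-3)[OF d] cyc3_props(4)[OF d, where L=LA] val_LA[of p] A_xc[OF x i] A_xc[OF x nx_I[OF i]]
        A_cc[OF i nx_I[OF i]] ellp_nx[OF i] i d nx_ne[OF i]
      unfolding p by (simp add: LA_diag mu_LA)
  next
    fix x i assume p: "p = cyc3 x (c (nx i)) (c i)" and x: "x = s \<or> x = t" and i: "i \<in> I"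
    have d: "x \<noteq> c (nx i)" "c (nx i) \<noteq> c i" "x \<noteq> c i" using x c_ne_s[OF i] c_ne_t[OF i] c_ne_s[OF nx_I[OF i]] c_ne_t[OF nx_I[OF i]] ci_cnx[OF i] by auto
    show ?thesis using cyc3_props(1-3)[OF d] cyc3_props(4)[OF d, where L=LA] val_LA[of p] A_xc[OF x i] A_xc[OF x nx_I[OF i]]
        A_cc[OF nx_I[OF i] i] ellp_nx[OF i] ellp_sym[of m "nx i" i] i d nx_ne[OF i]
      unfolding p by (simp add: LA_diag mu_LA)
  next
    fix a b d assume p: "p = cyc3 (c a) (c b) (c d)" and h: "1 \<le> a" "a < b" "b < d" "d \<le> m" "odd (b-a)" "odd (d-b)"
    note td = tri_dist[OF h(1-4)]
    have e: "ellp m a b + ellp m b d + ellp m d a = m"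
    proof -
      have "even (d - a)" using h by presburger
      then show ?thesis using h ellp_lt[of a b] ellp_lt[of b d] ellp_lt[of a d] ellp_sym[of m d a] by simp
    qed
    show ?thesis using cyc3_props(1-3)[OF td(1,2) td(3)] cyc3_props(4)[OF td(1,2) td(3), where L=LA] val_LA[of p]
        A_cc[OF td(4,5)] A_cc[OF td(5,6)] A_cc[OF td(6,4)] td e
      unfolding p by (simp add: LA_diag mu_LA)
  next
    fix a b d assume p: "p = cyc3 (c a) (c d) (c b)" and h: "1 \<le> a" "a < b" "b < d" "d \<le> m" "odd (b-a)" "odd (d-b)"
    note td = tri_dist[OF h(1-4)]
    have e: "ellp m a d + ellp m d b + ellp m b a = m"
    proof -
      have "even (d - a)" using h by presburger
      then show ?thesis using h ellp_lt[of a b] ellp_lt[of b d] ellp_lt[of a d] ellp_sym[of m d b] ellp_sym[of m b a] by simp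
    qed
    have d3: "c a \<noteq> c d" "c d \<noteq> c b" "c a \<noteq> c b" using td by auto
    show ?thesis using cyc3_props(1-3)[OF d3] cyc3_props(4)[OF d3, where L=LA] val_LA[of p]
        A_cc[OF td(4,6)] A_cc[OF td(6,5)] A_cc[OF td(5,4)] td e
      unfolding p by (simp add: LA_diag mu_LA)
  next
    assume "p \<in> {rot}"
    then have p: "p = rot" by simp
    have "(\<Sum>i\<in>I. mu LA (c i) (c (nx i))) = (\<Sum>i\<in>I. 1)"
    proof (rule sum.cong[OF refl])
      fix i assume i: "i \<in> I"
      show "mu LA (c i) (c (nx i)) = 1" using mu_LA[OF ci_cnx[OF i]] A_cc[OF i nx_I[OF i]] ellp_nx[OF i] ci_cnx[OF i] nx_ne[OF i] by simp
    qed
    then show ?thesis using rot_props(1-3) rot_props(4)[where L=LA] val_LA[of p] unfolding p by (simp add: LA_diag)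
  qed
  then show "bij p" "odd (card {u. p u \<noteq> u})" "(\<Sum>u\<in>UNIV. cost p u) = m" by auto
qed

lemma p5_props: "bij p5" "odd (card {u. p5 u \<noteq> u})" "(\<Sum>u\<in>UNIV. cost p5 u) = 4*k+1"
proof -
  note cp = cyc5_props(1-3)[OF p5_dist] cyc5_props(4)[OF p5_dist, where L=LA]
  show "bij p5" "odd (card {u. p5 u \<noteq> u})" using cp unfolding p5_def by simp_all
  have d: "s \<noteq> c 1" "c 1 \<noteq> t" "t \<noteq> c 2" "c 2 \<noteq> c 3" "c 3 \<noteq> s" using p5_dist by auto
  have "ellp m 2 3 = 1" using ellp_adj[of 2] I123 m_ge3 by simp
  then show "(\<Sum>u\<in>UNIV. cost p5 u) = 4*k+1"
    using cp val_LA[of p5] d A_xc[of s 1] A_xc[of t 1] A_xc[of t 2] A_xc[of s 3] A_cc[of 2 3] I123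
    unfolding p5_def by (simp add: LA_diag mu_LA)
qed

end

context cfg begin

lemma Qt_1a: "i \<in> I \<Longrightarrow> cyc3 s t (c i) \<in> Qt"
  unfolding Qt_def by (intro UnI1) blast
lemma Qt_1b: "i \<in> I \<Longrightarrow> cyc3 s (c i) t \<in> Qt"
  unfolding Qt_def by (rule UnI1, rule UnI1, rule UnI1, rule UnI1, rule UnI1, rule UnI2) blast
lemma Qt_2a: "x = s \<or> x = t \<Longrightarrow> i \<in> I \<Longrightarrow> cyc3 x (c i) (c (nx i)) \<in> Qt"
  unfolding Qt_def by (rule UnI1, rule UnI1, rule UnI1, rule UnI1, rule UnI2) blast
lemma Qt_2b: "x = s \<or> x = t \<Longrightarrow> i \<in> I \<Longrightarrow> cyc3 x (c (nx i)) (c i) \<in> Qt"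
  unfolding Qt_def by (rule UnI1, rule UnI1, rule UnI1, rule UnI2) blast
lemma Qt_3a: "1 \<le> a \<Longrightarrow> a < b \<Longrightarrow> b < d \<Longrightarrow> d \<le> m \<Longrightarrow> odd (b-a) \<Longrightarrow> odd (d-b) \<Longrightarrow> cyc3 (c a) (c b) (c d) \<in> Qt"
  unfolding Qt_def by (rule UnI1, rule UnI1, rule UnI2) blast
lemma Qt_3b: "1 \<le> a \<Longrightarrow> a < b \<Longrightarrow> b < d \<Longrightarrow> d \<le> m \<Longrightarrow> odd (b-a) \<Longrightarrow> odd (d-b) \<Longrightarrow> cyc3 (c a) (c d) (c b) \<in> Qt"
  unfolding Qt_def by (rule UnI1, rule UnI2) blast
lemma Qt_rot: "rot \<in> Qt"
  unfolding Qt_def by (rule UnI2) blast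

lemma core_val:
  fixes L :: "'v \<Rightarrow> 'v \<Rightarrow> real"
  assumes HQ: "\<And>q. q \<in> Qt \<Longrightarrow> val L q = K0" and H5v: "val L p5 = K0" and bp: "bij p"
  shows "val L p = K0"
proof -
  define \<Lambda> where "\<Lambda> = (\<Sum>u\<in>UNIV. L u u)"
  define M where "M = mu L"
  define K where "K = K0 - \<Lambda>"
  have M0: "M u u = 0" for u unfolding M_def mu_def by simp
  have c3: "M x y + M y z + M z x = K" if "cyc3 x y z \<in> Qt" "x \<noteq> y" "y \<noteq> z" "x \<noteq> z" for x y z
    using HQ[OF that(1)] cyc3_props(4)[OF that(2-4), where L=L] unfolding M_def K_def \<Lambda>_def by simp
  have H1a: "M s t + M t (c i) + M (c i) s = K" if i: "i \<in> I" for i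
  proof (rule c3)
    show "cyc3 s t (c i) \<in> Qt" using i by (rule Qt_1a)
    show "s \<noteq> t" "t \<noteq> c i" "s \<noteq> c i" using st c_ne_s[OF i] c_ne_t[OF i] by auto
  qed
  have H1b: "M s (c i) + M (c i) t + M t s = K" if i: "i \<in> I" for i
  proof (rule c3)
    show "cyc3 s (c i) t \<in> Qt" using i by (rule Qt_1b)
    show "s \<noteq> c i" "c i \<noteq> t" "s \<noteq> t" using st c_ne_s[OF i] c_ne_t[OF i] by auto
  qed
  have H2a: "M x (c i) + M (c i) (c (nx i)) + M (c (nx i)) x = K" if x: "x = s \<or> x = t" and i: "i \<in> I" for x i
  proof (rule c3)
    show "cyc3 x (c i) (c (nx i)) \<in> Qt" using x i by (rule Qt_2a)
  qed (use x c_ne_s[OF i] c_ne_t[OF i] c_ne_s[OF nx_I[OF i]] c_ne_t[OF nx_I[OF i]] ci_cnx[OF i] in auto)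
  have H2b: "M x (c (nx i)) + M (c (nx i)) (c i) + M (c i) x = K" if x: "x = s \<or> x = t" and i: "i \<in> I" for x i
  proof (rule c3)
    show "cyc3 x (c (nx i)) (c i) \<in> Qt" using x i by (rule Qt_2b)
  qed (use x c_ne_s[OF i] c_ne_t[OF i] c_ne_s[OF nx_I[OF i]] c_ne_t[OF nx_I[OF i]] ci_cnx[OF i] in auto)
  have H3a: "M (c a) (c b) + M (c b) (c d) + M (c d) (c a) = K"
    if h: "1 \<le> a" "a < b" "b < d" "d \<le> m" "odd (b-a)" "odd (d-b)" for a b d
  proof (rule c3)
    show "cyc3 (c a) (c b) (c d) \<in> Qt" using h by (rule Qt_3a)
  qed (use tri_dist[OF h(1-4)] in auto)
  have H3b: "M (c a) (c d) + M (c d) (c b) + M (c b) (c a) = K"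
    if h: "1 \<le> a" "a < b" "b < d" "d \<le> m" "odd (b-a)" "odd (d-b)" for a b d
  proof (rule c3)
    show "cyc3 (c a) (c d) (c b) \<in> Qt" using h by (rule Qt_3b)
  qed (use tri_dist[OF h(1-4)] in auto)
  have H4: "(\<Sum>i\<in>I. M (c i) (c (nx i))) = K"
  proof -
    note Qt_rot
    then show ?thesis using HQ rot_props(4)[where L=L] unfolding M_def K_def \<Lambda>_def by simp
  qed
  have H5: "M s (c 1) + M (c 1) t + M t (c 2) + M (c 2) (c 3) + M (c 3) s = K"
    using H5v cyc5_props(4)[OF p5_dist, where L=L] unfolding p5_def M_def K_def \<Lambda>_def by simp
  have cm: "K = 0 \<and> (\<forall>u v. M u v = (M s v - M v s)/2 - (M s u - M u s)/2)"
    by (rule core_mu[OF M0 H1a H1b H2a H2b H3a H3b H4 H5])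
  define \<phi> where "\<phi> v = (M s v - M v s)/2" for v
  have "val L p = \<Lambda> + (\<Sum>u\<in>UNIV. M u (p u))" unfolding M_def \<Lambda>_def by (rule val_moved) simp
  also have "(\<Sum>u\<in>UNIV. M u (p u)) = (\<Sum>u\<in>UNIV. \<phi> (p u) - \<phi> u)"
  proof (rule sum.cong[OF refl])
    fix u
    have "\<forall>u v. M u v = (M s v - M v s)/2 - (M s u - M u s)/2" using cm by (rule conjunct2)
    then show "M u (p u) = \<phi> (p u) - \<phi> u" unfolding \<phi>_def by blast
  qed
  also have "\<dots> = (\<Sum>u\<in>UNIV. \<phi> (p u)) - (\<Sum>u\<in>UNIV. \<phi> u)" by (rule sum_subtractf)
  also have "(\<Sum>u\<in>UNIV. \<phi> (p u)) = (\<Sum>u\<in>UNIV. \<phi> u)"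
    using sum.reindex_bij_betw[of p UNIV UNIV \<phi>] bp unfolding bij_def bij_betw_def by simp
  moreover have "K = 0" using cm by (rule conjunct1)
  ultimately show ?thesis unfolding K_def by simp
qed

end

context cfg begin

lemma P0_aff:
  "P0 \<subseteq> affine hull (insert (incidence (Mof p5)) ((\<lambda>q. incidence (Mof q)) ` Qt))"
proof
  define X where "X q = incidence (Mof q)" for q :: "'v \<Rightarrow> 'v"
  define T where "T = insert (X p5) (X ` Qt)"
  define x0 where "x0 = X rot"
  have x0T: "x0 \<in> T" unfolding T_def x0_def using Qt_rot by blast
  define S where "S = {x - x0 | x. x \<in> T - {x0}}"
  have aff: "affine hull T = {x0 + v | v. v \<in> span S}" unfolding S_def by (rule affine_hull_span[OF x0T])
  fix y :: "'v hvec" assume "y \<in> P0"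
  then obtain p where y: "y = X p" and bp: "bij p" unfolding P0_def X_def by blast
  have "y - x0 \<in> span S"
  proof (rule ccontr)
    assume nin: "y - x0 \<notin> span S"
    have "span S \<subset> span (insert (y - x0) S)"
    proof
      show "span S \<subseteq> span (insert (y - x0) S)" by (rule span_mono) blast
      show "span S \<noteq> span (insert (y - x0) S)" using nin span_base[of "y - x0" "insert (y - x0) S"] by blast
    qed
    then obtain z where z: "z \<noteq> 0" "z \<in> span (insert (y - x0) S)" "\<And>v. v \<in> span S \<Longrightarrow> orthogonal z v"
      by (rule orthogonal_to_subspace_exists_gen) blast
    define L where "L u v = z $ hm u v" for u v
    have zX: "z \<bullet> X q = val L q" for q unfolding X_def L_def val_def by (rule inner_incidence)
    have zT: "z \<bullet> x = z \<bullet> x0" if "x \<in> T" for x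
    proof (cases "x = x0")
      case False
      then have "x - x0 \<in> S" unfolding S_def using that by blast
      then have "orthogonal z (x - x0)" using z(3) span_base by blast
      then show ?thesis unfolding orthogonal_def by (simp add: inner_diff_right)
    qed simp
    have "val L p = z \<bullet> x0"
    proof (rule core_val)
      show "val L q = z \<bullet> x0" if "q \<in> Qt" for q
        using zT[of "X q"] zX[of q] that unfolding T_def by simp
      show "val L p5 = z \<bullet> x0" using zT[of "X p5"] zX[of p5] unfolding T_def by simp
    qed (rule bp)
    then have "orthogonal z (y - x0)" unfolding orthogonal_def y by (simp add: inner_diff_right zX)
    then have "orthogonal z v" if "v \<in> insert (y - x0) S" for v
      using that z(3) span_base by blast
    then have "orthogonal z z" by (intro orthogonal_to_span[OF z(2)]) 
    then show False using z(1) by (simp add: orthogonal_self)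
  qed
  then have "y \<in> affine hull T" unfolding aff by (intro CollectI exI[of _ "y - x0"]) simp
  then show "y \<in> affine hull (insert (incidence (Mof p5)) ((\<lambda>q. incidence (Mof q)) ` Qt))"
    unfolding T_def X_def .
qed

end

theorem corollary11:
  fixes n k :: nat and c :: "nat \<Rightarrow> 'v::finite" and s t :: 'v
  assumes "CARD('v) = n" and "n \<ge> 5" and "odd n" and "k = (n - 3) div 2"
    and "inj_on c {1..2*k+1}"
    and "s \<noteq> t" and "s \<notin> c ` {1..2*k+1}" and "t \<notin> c ` {1..2*k+1}"
  shows "(\<forall>y \<in> odd_pm_polytope UNIV (complete_edges UNIV).
            canon_lhs (complete_edges UNIV) (C_induced_coeff UNIV (complete_edges UNIV) c k s t) y
              \<ge> real (2*k+1))
       \<and> {y \<in> odd_pm_polytope UNIV (complete_edges UNIV).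
            canon_lhs (complete_edges UNIV) (C_induced_coeff UNIV (complete_edges UNIV) c k s t) y
              = real (2*k+1)} facet_of odd_pm_polytope UNIV (complete_edges UNIV)"
proof -
  interpret cfg n k c s t by (rule cfg.intro) (fact assms)+
  define a where "a = C_induced_coeff UNIV E c k s t"
  define w where "w = wvec E a"
  have canon: "canon_lhs E a y = w \<bullet> y" for y unfolding w_def by (rule canon_inner)
  define P where "P = odd_pm_polytope UNIV E"
  have Peq: "P = convex hull P0" unfolding P_def by (rule polytope_eq)
  have X_canon: "w \<bullet> incidence (Mof p) = (\<Sum>u\<in>UNIV. cost p u)" for p
    using canon_cost[of p] canon unfolding a_def by simp
  have P0val: "w \<bullet> x \<ge> real m" if "x \<in> P0" for x
  proof -
    from that obtain p where "x = incidence (Mof p)" "bij p" "odd (card {u. p u \<noteq> u})"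
      unfolding P0_def by blast
    then show ?thesis using X_canon[of p] valid_perm[of p] by simp
  qed
  have valid: "w \<bullet> y \<ge> real m" if "y \<in> P" for y
  proof -
    have "convex hull P0 \<subseteq> {y. w \<bullet> y \<ge> real m}"
      by (rule hull_minimal) (use P0val convex_halfspace_ge in auto)
    then show ?thesis using that Peq by blast
  qed
  define F where "F = {y \<in> P. canon_lhs E a y = real m}"
  have F_eq: "F = P \<inter> {x. w \<bullet> x = real m}" unfolding F_def canon by blast
  have face: "F face_of P"
    unfolding F_eq Peq by (rule face_of_Int_supporting_hyperplane_ge) (use valid Peq in auto)
  have P0P: "P0 \<subseteq> P" unfolding Peq by (rule hull_subset)
  have QP0: "incidence (Mof q) \<in> P0" if "q \<in> Qt" for q
    unfolding P0_def using Qt_props[OF that] by blast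
  have QF: "incidence (Mof q) \<in> F" if "q \<in> Qt" for q
    unfolding F_eq using QP0[OF that] P0P Qt_props(3)[OF that] X_canon[of q] by auto
  have X5P: "incidence (Mof p5) \<in> P" using P0P p5_props unfolding P0_def by blast
  have X5F: "incidence (Mof p5) \<notin> F"
    unfolding F_eq using p5_props(3) X_canon[of p5] k_ge1 by simp
  have Fne: "F \<noteq> {}" using QF[OF Qt_rot] by blast
  have FP: "F \<noteq> P" using X5P X5F by blast
  have lt: "aff_dim F < aff_dim P"
    using face_of_aff_dim_lt[OF _ face FP] Peq by simp
  have le: "aff_dim P \<le> aff_dim F + 1"
  proof -
    define Q where "Q = (\<lambda>q. incidence (Mof q)) ` Qt"
    have QF': "Q \<subseteq> F" unfolding Q_def using QF by blast
    have "aff_dim P = aff_dim (P0 :: 'v hvec set)" unfolding Peq by (rule aff_dim_convex_hull)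
    also have "\<dots> \<le> aff_dim (affine hull (insert (incidence (Mof p5)) Q))"
      using P0_aff unfolding Q_def by (rule aff_dim_subset)
    also have "\<dots> = aff_dim (insert (incidence (Mof p5)) Q)" by simp
    also have "\<dots> \<le> aff_dim Q + 1" by (simp add: aff_dim_insert)
    also have "\<dots> \<le> aff_dim F + 1" using aff_dim_subset[OF QF'] by simp
    finally show ?thesis .
  qed
  have "F facet_of P" unfolding facet_of_def using face Fne lt le by simp
  moreover have "\<forall>y\<in>P. canon_lhs E a y \<ge> real m" using valid canon by simp
  ultimately show ?thesis unfolding F_def P_def a_def by simp
qed

end
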